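(* Let $A\in\mathbb{C}^{M\times N}$ be a deterministic matrix with $m$th row $a_m^H$. Let $x\sim\mathcal{CN}(0_{N\times1},\sigma_x^2I_N)$ (i.i.d. circularly-symmetric complex Gaussian), $e^z\sim\mathcal{CN}(0_{M\times1},C_{e^z})$ circularly-symmetric complex Gaussian, and $e^y\sim\mathcal{N}(\bar e^y,C_{e^y})$ a real Gaussian vector, with $x,e^z,e^y$ independent. Let $y=|Ax+e^z|^2+e^y\in\mathbb{R}^M$ (entrywise squared modulus) and use the identity preprocessing $\mathcal{T}(y)=y$. Define $$C_z=\sigma_x^2AA^H+C_{e^z},\quad \bar y=\mathrm{diag}(C_z)+\bar e^y,\quad T=C_z\odot C_z^*+C_{e^y},$$ assume $T$ is invertible, let $t\in\mathbb{R}^M$ solve $Tt=y-\bar y$, and let $V_m=\sigma_x^4a_ma_m^H$ for $m=1,\dots,M$. Then the matrix of the form $W_0+\sum_{m=1}^My_mW_m$ ($W_m\in\mathbb{C}^{N\times N}$) minimizing $\mathbb{E}[\|W_0+\sum_{m}y_mW_m-xx^H\|_F^2]$ is $$D_y^{\mathbb{C}}=\sigma_x^2I_N+\sum_{m=1}^Mt_mV_m,$$ and its spectral MSE is $$\mathbb{E}\big[\|D^{\mathbb{C}}_y-xx^H\|_F^2\big]=\mathbb{E}\big[\|xx^H-\sigma_x^2I_N\|_F^2\big]-\sum_{m=1}^M\sum_{m'=1}^M[T^{-1}]_{m,m'}\mathrm{tr}\big(V_m^HV_{m'}\big).$$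
   Context: $\odot$ is the entrywise (Hadamard) product, $C_z^*$ the entrywise complex conjugate, $\mathrm{diag}(C)$ the vector of diagonal entries of $C$. Expectations are over $x,e^z,e^y$. The linear spectral estimate of $x$ is a scaled leading eigenvector of $D_y^{\mathbb{C}}$, i.e., a minimizer of $\|D_y^{\mathbb{C}}-\tilde x\tilde x^H\|_F$ over $\tilde x\in\mathbb{C}^N$. *)

theory Defs
  imports "HOL-Probability.Probability"
begin

definition cadj :: "complex^'c^'r \<Rightarrow> complex^'r^'c" where
  "cadj A = (\<chi> i j. cnj (A $ j $ i))"

definition frob_norm :: "complex^'c^'r \<Rightarrow> real" where
  "frob_norm B = sqrt (\<Sum>i\<in>UNIV. \<Sum>j\<in>UNIV. (cmod (B $ i $ j))\<^sup>2)"

definition couter :: "complex^'n \<Rightarrow> complex^'n \<Rightarrow> complex^'n^'n" where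
  "couter u v = (\<chi> i j. u $ i * cnj (v $ j))"

definition gauss_measure :: "real \<Rightarrow> real \<Rightarrow> real measure" where
  "gauss_measure mu v =
     (if v = 0 then return borel mu else density lborel (normal_density mu (sqrt v)))"

definition real_gaussian_vec ::
  "'w measure \<Rightarrow> ('w \<Rightarrow> real^'m) \<Rightarrow> real^'m \<Rightarrow> real^'m^'m \<Rightarrow> bool" where
  "real_gaussian_vec M e mu C \<longleftrightarrow>
     e \<in> borel_measurable M \<and> (\<forall>i j. C $ i $ j = C $ j $ i) \<and>
     (\<forall>w. 0 \<le> w \<bullet> (C *v w) \<and>
          distr M borel (\<lambda>\<omega>. w \<bullet> e \<omega>) = gauss_measure (w \<bullet> mu) (w \<bullet> (C *v w)))"

text \<open>Circularly-symmetric complex Gaussian vector CN(0, C): C Hermitian, and every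
  real-linear functional Re(w^H z) is real Gaussian with mean 0 and variance (w^H C w)/2.\<close>
definition cscg_vec ::
  "'w measure \<Rightarrow> ('w \<Rightarrow> complex^'n) \<Rightarrow> complex^'n^'n \<Rightarrow> bool" where
  "cscg_vec M z C \<longleftrightarrow>
     z \<in> borel_measurable M \<and> (\<forall>i j. C $ i $ j = cnj (C $ j $ i)) \<and>
     (\<forall>w. let v = Re (\<Sum>i\<in>UNIV. \<Sum>j\<in>UNIV. cnj (w $ i) * C $ i $ j * w $ j) / 2 in
          0 \<le> v \<and>
          distr M borel (\<lambda>\<omega>. Re (\<Sum>i\<in>UNIV. cnj (w $ i) * z \<omega> $ i)) = gauss_measure 0 v)"

text \<open>Mutual independence of three random variables (of possibly different types):
  independence of the sigma-algebras they generate.\<close>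
definition indep3 ::
  "'w measure \<Rightarrow> ('w \<Rightarrow> 'a::topological_space) \<Rightarrow> ('w \<Rightarrow> 'b::topological_space)
     \<Rightarrow> ('w \<Rightarrow> 'c::topological_space) \<Rightarrow> bool" where
  "indep3 M X Y Z \<longleftrightarrow>
     prob_space.indep_sets M
       (\<lambda>i::nat. if i = 0 then sets (vimage_algebra (space M) X borel)
                 else if i = 1 then sets (vimage_algebra (space M) Y borel)
                 else sets (vimage_algebra (space M) Z borel)) {0, 1, 2}"


definition Cz_of :: "real \<Rightarrow> complex^'n^'m \<Rightarrow> complex^'m^'m \<Rightarrow> complex^'m^'m" where
  "Cz_of \<sigma>x A Cez = \<sigma>x\<^sup>2 *\<^sub>R (A ** cadj A) + Cez"

definition ybar_of :: "complex^'m^'m \<Rightarrow> real^'m \<Rightarrow> real^'m" where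
  "ybar_of Cz eybar = (\<chi> m. Re (Cz $ m $ m) + eybar $ m)"

text \<open>T = C_z (Hadamard) conj(C_z) + C_{e^y}; entries |C_z(i,j)|^2 + C_{e^y}(i,j).\<close>
definition T_of :: "complex^'m^'m \<Rightarrow> real^'m^'m \<Rightarrow> real^'m^'m" where
  "T_of Cz Cey = (\<chi> i j. (cmod (Cz $ i $ j))\<^sup>2 + Cey $ i $ j)"

text \<open>a_m, where a_m^H is the m-th row of A.\<close>
definition arow :: "complex^'n^'m \<Rightarrow> 'm \<Rightarrow> complex^'n" where
  "arow A m = (\<chi> k. cnj (A $ m $ k))"

definition V_of :: "real \<Rightarrow> complex^'n^'m \<Rightarrow> 'm \<Rightarrow> complex^'n^'n" where
  "V_of \<sigma>x A m = (\<sigma>x ^ 4) *\<^sub>R couter (arow A m) (arow A m)"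

end

theory Submission
  imports Defs
begin

lemma gm_space[simp]: "space (gauss_measure mu v) = UNIV"
  by (simp add: gauss_measure_def)

lemma gm_sets[simp]: "sets (gauss_measure mu v) = sets borel"
  by (simp add: gauss_measure_def)

lemma gm_moments:
  assumes v: "0 \<le> v"
  shows "integrable (gauss_measure mu v) (\<lambda>x. (x - mu)^k)"
    and "integral\<^sup>L (gauss_measure mu v) (\<lambda>x. x - mu) = 0"
    and "integral\<^sup>L (gauss_measure mu v) (\<lambda>x. (x - mu)^2) = v"
    and "integral\<^sup>L (gauss_measure mu v) (\<lambda>x. (x - mu)^4) = 3 * v^2"
proof -
  have "integrable (gauss_measure mu v) (\<lambda>x. (x - mu)^k) \<and>
    integral\<^sup>L (gauss_measure mu v) (\<lambda>x. x - mu) = 0 \<and>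
    integral\<^sup>L (gauss_measure mu v) (\<lambda>x. (x - mu)^2) = v \<and>
    integral\<^sup>L (gauss_measure mu v) (\<lambda>x. (x - mu)^4) = 3 * v^2"
  proof (cases "v = 0")
    case True
    interpret R: prob_space "return borel mu" by (rule prob_space_return) simp
    have "integrable (return borel mu) (\<lambda>x. (x - mu)^k)"
      by (rule integrable_cong_AE_imp[OF R.integrable_const[of "(mu-mu)^k"]]) (auto simp: AE_return)
    then show ?thesis using True
      by (simp add: gauss_measure_def integral_return)
  next
    case False
    then have s: "0 < sqrt v" using v by simp
    have D: "gauss_measure mu v = density lborel (normal_density mu (sqrt v))"
      using False by (simp add: gauss_measure_def)
    have I: "\<And>f. f \<in> borel_measurable borel \<Longrightarrow> integrable (gauss_measure mu v) f \<longleftrightarrow>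
       integrable lborel (\<lambda>x. normal_density mu (sqrt v) x * f x)"
      unfolding D by (subst integrable_density) auto
    have J: "\<And>f. f \<in> borel_measurable borel \<Longrightarrow> integral\<^sup>L (gauss_measure mu v) f =
       integral\<^sup>L lborel (\<lambda>x. normal_density mu (sqrt v) x * f x)"
      unfolding D by (subst integral_density) auto
    have 1: "integrable (gauss_measure mu v) (\<lambda>x. (x - mu)^k)"
      using I integrable_normal_moment[OF s] by simp
    have 2: "integral\<^sup>L (gauss_measure mu v) (\<lambda>x. x - mu) = 0"
      using J integral_normal_moment_odd[OF s, of mu 0] by simp
    have 3: "integral\<^sup>L (gauss_measure mu v) (\<lambda>x. (x - mu)^2) = v"
      using J integral_normal_moment_even[OF s, of mu 1] v by simp
    have 4: "integral\<^sup>L (gauss_measure mu v) (\<lambda>x. (x - mu)^4) = 3 * v^2"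
      using J integral_normal_moment_even[OF s, of mu 2] v
      by (simp add: power2_eq_square fact_numeral eval_nat_numeral field_simps)
    show ?thesis using 1 2 3 4 by blast
  qed
  then show "integrable (gauss_measure mu v) (\<lambda>x. (x - mu)^k)"
    and "integral\<^sup>L (gauss_measure mu v) (\<lambda>x. x - mu) = 0"
    and "integral\<^sup>L (gauss_measure mu v) (\<lambda>x. (x - mu)^2) = v"
    and "integral\<^sup>L (gauss_measure mu v) (\<lambda>x. (x - mu)^4) = 3 * v^2" by blast+
qed

lemma distr_moments:
  assumes P: "prob_space M" and X: "X \<in> borel_measurable M"
    and d: "distr M borel X = gauss_measure mu v" and v: "0 \<le> v"
  shows "integrable M (\<lambda>w. (X w - mu)^k)"
    and "integral\<^sup>L M (\<lambda>w. X w - mu) = 0"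
    and "integral\<^sup>L M (\<lambda>w. (X w - mu)^2) = v"
    and "integral\<^sup>L M (\<lambda>w. (X w - mu)^4) = 3 * v^2"
proof -
  have I: "\<And>f::real\<Rightarrow>real. f \<in> borel_measurable borel \<Longrightarrow> integrable M (\<lambda>w. f (X w)) \<longleftrightarrow> integrable (gauss_measure mu v) f"
    by (subst d[symmetric], subst integrable_distr_eq) (use X in auto)
  have J: "\<And>f::real\<Rightarrow>real. f \<in> borel_measurable borel \<Longrightarrow> integral\<^sup>L M (\<lambda>w. f (X w)) = integral\<^sup>L (gauss_measure mu v) f"
    by (subst d[symmetric], subst integral_distr) (use X in auto)
  show "integrable M (\<lambda>w. (X w - mu)^k)"
    using I[of "\<lambda>x. (x - mu)^k"] gm_moments[OF v] by simp
  show "integral\<^sup>L M (\<lambda>w. X w - mu) = 0"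
    using J[of "\<lambda>x. (x - mu)"] gm_moments[OF v] by simp
  show "integral\<^sup>L M (\<lambda>w. (X w - mu)^2) = v"
    using J[of "\<lambda>x. (x - mu)^2"] gm_moments[OF v] by simp
  show "integral\<^sup>L M (\<lambda>w. (X w - mu)^4) = 3 * v^2"
    using J[of "\<lambda>x. (x - mu)^4"] gm_moments[OF v] by simp
qed

lemma distr_lborel_borel: "distr M lborel X = distr M borel X"
  by (rule distr_cong) auto

lemma gauss_zero_AE:
  assumes X: "X \<in> borel_measurable M" and d: "distr M borel X = gauss_measure mu 0"
  shows "AE w in M. X w = mu"
proof -
  have "AE x in distr M borel X. x = mu"
    unfolding d gauss_measure_def by (simp add: AE_return)
  then show ?thesis
    by (subst (asm) AE_distr_iff) (use X in auto)
qed

lemma gauss_distributed: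
  assumes X: "X \<in> borel_measurable M" and d: "distr M borel X = gauss_measure mu v" and v: "0 < v"
  shows "distributed M lborel X (normal_density mu (sqrt v))"
  unfolding distributed_def using X d v
  by (auto simp: distr_lborel_borel gauss_measure_def)

lemma distributed_gauss:
  assumes "distributed M lborel X (normal_density mu (sqrt v))" and v: "0 < v"
  shows "distr M borel X = gauss_measure mu v"
  using assms unfolding distributed_def
  by (auto simp: distr_lborel_borel gauss_measure_def)

lemma gauss_add:
  assumes P: "prob_space M" and X: "X \<in> borel_measurable M" and Y: "Y \<in> borel_measurable M"
    and ind: "prob_space.indep_var M borel X borel Y"
    and dX: "distr M borel X = gauss_measure 0 v1" and dY: "distr M borel Y = gauss_measure 0 v2"
    and v1: "0 \<le> v1" and v2: "0 \<le> v2"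
  shows "distr M borel (\<lambda>w. X w + Y w) = gauss_measure 0 (v1 + v2)"
proof -
  interpret prob_space M by fact
  consider "v1 = 0" | "v2 = 0" | "0 < v1 \<and> 0 < v2" using v1 v2 by linarith
  then show ?thesis
  proof cases
    case 1
    have "AE w in M. X w = 0" using gauss_zero_AE[OF X] dX 1 by simp
    then have "distr M borel (\<lambda>w. X w + Y w) = distr M borel Y"
      by (intro distr_cong_AE) (use X Y in auto)
    then show ?thesis using dY 1 by simp
  next
    case 2
    have "AE w in M. Y w = 0" using gauss_zero_AE[OF Y] dY 2 by simp
    then have "distr M borel (\<lambda>w. X w + Y w) = distr M borel X"
      by (intro distr_cong_AE) (use X Y in auto)
    then show ?thesis using dX 2 by simp
  next
    case 3
    have "distributed M lborel (\<lambda>w. X w + Y w) (normal_density (0 + 0) (sqrt ((sqrt v1)\<^sup>2 + (sqrt v2)\<^sup>2)))"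
      by (rule add_indep_normal[OF ind]) (use 3 gauss_distributed[OF X dX] gauss_distributed[OF Y dY] in auto)
    then show ?thesis using 3 by (intro distributed_gauss) auto
  qed
qed

lemma ineq_t: "(t::real) \<le> 1 + t^2"
proof -
  have "0 \<le> (t - 1)^2" by simp
  then have "2*t \<le> t^2 + 1" by (simp add: power2_eq_square algebra_simps)
  moreover have "0 \<le> t^2" by simp
  ultimately show ?thesis by linarith
qed

lemma ineq_sq4: "(x::real)^2 \<le> 1 + x^4"
  using ineq_t[of "x^2"] by (simp add: power_mult[symmetric])

lemma ineq_ab: "\<bar>(a::real) * b\<bar> \<le> a^2 + b^2"
proof -
  have "0 \<le> (\<bar>a\<bar> - \<bar>b\<bar>)^2" by simp
  then have "2 * (\<bar>a\<bar> * \<bar>b\<bar>) \<le> \<bar>a\<bar>^2 + \<bar>b\<bar>^2" by (simp add: power2_eq_square algebra_simps)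
  moreover have "0 \<le> \<bar>a\<bar> * \<bar>b\<bar>" by simp
  ultimately show ?thesis unfolding abs_mult power2_abs by linarith
qed

lemma ineq_abcd: "\<bar>(a::real) * b * c * d\<bar> \<le> a^4 + b^4 + c^4 + d^4"
proof -
  have 1: "\<bar>a * b * c * d\<bar> \<le> (a*b)^2 + (c*d)^2" using ineq_ab[of "a*b" "c*d"] by (simp add: mult.assoc)
  have 2: "(a*b)^2 \<le> a^4 + b^4" using ineq_ab[of "a^2" "b^2"]
    by (simp add: power_mult_distrib power_mult[symmetric])
  have 3: "(c*d)^2 \<le> c^4 + d^4" using ineq_ab[of "c^2" "d^2"]
    by (simp add: power_mult_distrib power_mult[symmetric])
  show ?thesis using 1 2 3 by linarith
qed

lemma polar4: "24 * ((a::real) * b * c * d) =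
   (a+b+c+d)^4 - (a+b+c)^4 - (a+b+d)^4 - (a+c+d)^4 - (b+c+d)^4
   + (a+b)^4 + (a+c)^4 + (a+d)^4 + (b+c)^4 + (b+d)^4 + (c+d)^4 - a^4 - b^4 - c^4 - d^4"
  by (simp add: power4_eq_xxxx algebra_simps)
lemma nineq_sq4: "norm ((x::real)^2) \<le> norm (1 + x^4)"
proof -
  have "0 \<le> x^4" by (simp add: zero_le_even_power)
  then show ?thesis using ineq_sq4[of x] by simp
qed

lemma nineq_ab: "norm ((a::real) * b) \<le> norm (a^2 + b^2)"
  using ineq_ab[of a b] by simp

lemma nineq_abcd: "norm ((a::real) * b * c * d) \<le> norm (a^4 + b^4 + c^4 + d^4)"
proof -
  have "0 \<le> a^4" "0 \<le> b^4" "0 \<le> c^4" "0 \<le> d^4" by (simp_all add: zero_le_even_power)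
  then show ?thesis using ineq_abcd[of a b c d] by simp
qed

lemma gauss_family_moments:
  fixes L :: "'v::plus \<Rightarrow> 'w \<Rightarrow> real" and B :: "'v \<Rightarrow> 'v \<Rightarrow> real"
  assumes P: "prob_space M"
    and Lm: "\<And>a. L a \<in> borel_measurable M"
    and Ladd: "\<And>a b w. L (a+b) w = L a w + L b w"
    and Badd: "\<And>a b c. B (a+b) c = B a c + B b c"
    and Bsym: "\<And>a b. B a b = B b a"
    and I4: "\<And>a. integrable M (\<lambda>w. (L a w)^4)"
    and E2: "\<And>a. integral\<^sup>L M (\<lambda>w. (L a w)^2) = B a a"
    and E4: "\<And>a. integral\<^sup>L M (\<lambda>w. (L a w)^4) = 3 * (B a a)^2"
  shows "integrable M (\<lambda>w. L a w * L b w)"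
    and "integral\<^sup>L M (\<lambda>w. L a w * L b w) = B a b"
    and "integrable M (\<lambda>w. L a w * L b w * L c w * L d w)"
    and "integral\<^sup>L M (\<lambda>w. L a w * L b w * L c w * L d w) = B a b * B c d + B a c * B b d + B a d * B b c"
proof -
  interpret prob_space M by fact
  have Badd2: "\<And>a b c. B a (b+c) = B a b + B a c" using Badd Bsym by metis
  have I2: "\<And>a. integrable M (\<lambda>w. (L a w)^2)"
  proof -
    fix a
    show "integrable M (\<lambda>w. (L a w)^2)"
      by (rule Bochner_Integration.integrable_bound[OF Bochner_Integration.integrable_add[OF integrable_const[of 1] I4[of a]]])
         (use Lm in \<open>auto simp del: real_norm_def intro!: AE_I2 nineq_sq4\<close>)
  qed
  show II: "integrable M (\<lambda>w. L a w * L b w)"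
    by (rule Bochner_Integration.integrable_bound[OF Bochner_Integration.integrable_add[OF I2[of a] I2[of b]]])
       (use Lm in \<open>auto simp del: real_norm_def intro!: AE_I2 nineq_ab\<close>)
  have "integral\<^sup>L M (\<lambda>w. (L (a+b) w)^2) = integral\<^sup>L M (\<lambda>w. (L a w)^2 + (L b w)^2 + 2 * (L a w * L b w))"
    by (simp add: Ladd power2_eq_square algebra_simps)
  also have "\<dots> = B a a + B b b + 2 * integral\<^sup>L M (\<lambda>w. L a w * L b w)"
    using I2 II E2 by (simp add: integral_add)
  finally show "integral\<^sup>L M (\<lambda>w. L a w * L b w) = B a b"
    using E2[of "a+b"] Badd Badd2 Bsym[of a b] by simp
  show "integrable M (\<lambda>w. L a w * L b w * L c w * L d w)"
    by (rule Bochner_Integration.integrable_bound[OF Bochner_Integration.integrable_add[OF Bochner_Integration.integrable_add[OF Bochner_Integration.integrable_add[OF I4[of a] I4[of b]] I4[of c]] I4[of d]]])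
       (use Lm in \<open>auto simp del: real_norm_def intro!: AE_I2 nineq_abcd\<close>)
  have eq: "\<And>w. L a w * L b w * L c w * L d w = (1/24) *
    ((L (a+b+c+d) w)^4 - (L (a+b+c) w)^4 - (L (a+b+d) w)^4 - (L (a+c+d) w)^4 - (L (b+c+d) w)^4
   + (L (a+b) w)^4 + (L (a+c) w)^4 + (L (a+d) w)^4 + (L (b+c) w)^4 + (L (b+d) w)^4 + (L (c+d) w)^4
   - (L a w)^4 - (L b w)^4 - (L c w)^4 - (L d w)^4)"
    unfolding Ladd using polar4 by (simp add: field_simps)
  have "integral\<^sup>L M (\<lambda>w. L a w * L b w * L c w * L d w) = (1/24) *
    (3 * (B (a+b+c+d) (a+b+c+d))^2 - 3 * (B (a+b+c) (a+b+c))^2 - 3 * (B (a+b+d) (a+b+d))^2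
     - 3 * (B (a+c+d) (a+c+d))^2 - 3 * (B (b+c+d) (b+c+d))^2
   + 3 * (B (a+b) (a+b))^2 + 3 * (B (a+c) (a+c))^2 + 3 * (B (a+d) (a+d))^2 + 3 * (B (b+c) (b+c))^2
   + 3 * (B (b+d) (b+d))^2 + 3 * (B (c+d) (c+d))^2
   - 3 * (B a a)^2 - 3 * (B b b)^2 - 3 * (B c c)^2 - 3 * (B d d)^2)"
    unfolding eq by (simp add: I4 E4 integral_diff integral_add Bochner_Integration.integrable_diff Bochner_Integration.integrable_add)
  also have "\<dots> = B a b * B c d + B a c * B b d + B a d * B b c"
    unfolding Badd Badd2
    by (simp add: Bsym[of b a] Bsym[of c a] Bsym[of d a] Bsym[of c b] Bsym[of d b] Bsym[of d c] power2_eq_square algebra_simps)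
  finally show "integral\<^sup>L M (\<lambda>w. L a w * L b w * L c w * L d w) = B a b * B c d + B a c * B b d + B a d * B b c" .
qed

lemma integrable_Complex:
  fixes f g :: "'a \<Rightarrow> real"
  assumes "integrable M f" "integrable M g"
  shows "integrable M (\<lambda>w. Complex (f w) (g w))"
proof -
  have "(\<lambda>w. Complex (f w) (g w)) = (\<lambda>w. complex_of_real (f w) + \<i> * complex_of_real (g w))"
    by (auto simp: complex_eq_iff)
  then show ?thesis using assms by simp
qed

lemma integral_Complex:
  fixes f g :: "'a \<Rightarrow> real"
  assumes "integrable M f" "integrable M g"
  shows "integral\<^sup>L M (\<lambda>w. Complex (f w) (g w)) = Complex (integral\<^sup>L M f) (integral\<^sup>L M g)"
proof -
  have "(\<lambda>w. Complex (f w) (g w)) = (\<lambda>w. complex_of_real (f w) + \<i> * complex_of_real (g w))"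
    by (auto simp: complex_eq_iff)
  then show ?thesis using assms by (simp add: integral_add complex_eq_iff)
qed

lemma complex_gauss_moments:
  fixes L :: "'v::plus \<Rightarrow> 'w \<Rightarrow> real" and B :: "'v \<Rightarrow> 'v \<Rightarrow> real"
    and \<alpha> \<beta> :: "'i \<Rightarrow> 'v" and c :: "'i \<Rightarrow> 'i \<Rightarrow> complex"
  assumes P: "prob_space M"
    and Lm: "\<And>a. L a \<in> borel_measurable M"
    and Ladd: "\<And>a b w. L (a+b) w = L a w + L b w"
    and Badd: "\<And>a b c. B (a+b) c = B a c + B b c"
    and Bsym: "\<And>a b. B a b = B b a"
    and I4: "\<And>a. integrable M (\<lambda>w. (L a w)^4)"
    and E2: "\<And>a. integral\<^sup>L M (\<lambda>w. (L a w)^2) = B a a"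
    and E4: "\<And>a. integral\<^sup>L M (\<lambda>w. (L a w)^4) = 3 * (B a a)^2"
    and Baa: "\<And>p q. B (\<alpha> p) (\<alpha> q) = Re (c p q) / 2"
    and Bbb: "\<And>p q. B (\<beta> p) (\<beta> q) = Re (c p q) / 2"
    and Bab: "\<And>p q. B (\<alpha> p) (\<beta> q) = - Im (c p q) / 2"
    and Bba: "\<And>p q. B (\<beta> p) (\<alpha> q) = Im (c p q) / 2"
    and herm: "\<And>p q. c q p = cnj (c p q)"
  shows "integrable M (\<lambda>w. Complex (L (\<alpha> a) w) (L (\<beta> a) w) * cnj (Complex (L (\<alpha> b) w) (L (\<beta> b) w)))"
    and "integral\<^sup>L M (\<lambda>w. Complex (L (\<alpha> a) w) (L (\<beta> a) w) * cnj (Complex (L (\<alpha> b) w) (L (\<beta> b) w))) = c a b"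
    and "integrable M (\<lambda>w. Complex (L (\<alpha> a) w) (L (\<beta> a) w) * cnj (Complex (L (\<alpha> b) w) (L (\<beta> b) w))
              * Complex (L (\<alpha> c') w) (L (\<beta> c') w) * cnj (Complex (L (\<alpha> d) w) (L (\<beta> d) w)))"
    and "integral\<^sup>L M (\<lambda>w. Complex (L (\<alpha> a) w) (L (\<beta> a) w) * cnj (Complex (L (\<alpha> b) w) (L (\<beta> b) w))
              * Complex (L (\<alpha> c') w) (L (\<beta> c') w) * cnj (Complex (L (\<alpha> d) w) (L (\<beta> d) w)))
         = c a b * c c' d + c a d * c c' b"
proof -
  note G = gauss_family_moments[OF P Lm Ladd Badd Bsym I4 E2 E4]
  note I2 = G(1) and E2' = G(2) and I4' = G(3) and E4' = G(4)
  have eq2: "\<And>w. Complex (L (\<alpha> a) w) (L (\<beta> a) w) * cnj (Complex (L (\<alpha> b) w) (L (\<beta> b) w))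
     = Complex (L (\<alpha> a) w * L (\<alpha> b) w + L (\<beta> a) w * L (\<beta> b) w) (L (\<beta> a) w * L (\<alpha> b) w - L (\<alpha> a) w * L (\<beta> b) w)"
    by (simp add: complex_eq_iff)
  show "integrable M (\<lambda>w. Complex (L (\<alpha> a) w) (L (\<beta> a) w) * cnj (Complex (L (\<alpha> b) w) (L (\<beta> b) w)))"
    unfolding eq2 by (intro integrable_Complex) (simp_all add: I2)
  show "integral\<^sup>L M (\<lambda>w. Complex (L (\<alpha> a) w) (L (\<beta> a) w) * cnj (Complex (L (\<alpha> b) w) (L (\<beta> b) w))) = c a b"
    unfolding eq2 by (subst integral_Complex) (simp_all add: I2 E2' integral_add integral_diff Baa Bbb Bab Bba complex_eq_iff)
  define a1 where "a1 = L (\<alpha> a)" define a2 where "a2 = L (\<beta> a)"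
  define b1 where "b1 = L (\<alpha> b)" define b2 where "b2 = L (\<beta> b)"
  define c1 where "c1 = L (\<alpha> c')" define c2 where "c2 = L (\<beta> c')"
  define d1 where "d1 = L (\<alpha> d)" define d2 where "d2 = L (\<beta> d)"
  have eq4: "\<And>w. Complex (L (\<alpha> a) w) (L (\<beta> a) w) * cnj (Complex (L (\<alpha> b) w) (L (\<beta> b) w))
              * Complex (L (\<alpha> c') w) (L (\<beta> c') w) * cnj (Complex (L (\<alpha> d) w) (L (\<beta> d) w))
     = Complex (a1 w * b1 w * c1 w * d1 w + a1 w * b1 w * c2 w * d2 w + a2 w * b2 w * c1 w * d1 w + a2 w * b2 w * c2 w * d2 w
               - a2 w * b1 w * c2 w * d1 w + a2 w * b1 w * c1 w * d2 w + a1 w * b2 w * c2 w * d1 w - a1 w * b2 w * c1 w * d2 w)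
               (a1 w * b1 w * c2 w * d1 w - a1 w * b1 w * c1 w * d2 w + a2 w * b2 w * c2 w * d1 w - a2 w * b2 w * c1 w * d2 w
               + a2 w * b1 w * c1 w * d1 w + a2 w * b1 w * c2 w * d2 w - a1 w * b2 w * c1 w * d1 w - a1 w * b2 w * c2 w * d2 w)"
    unfolding a1_def a2_def b1_def b2_def c1_def c2_def d1_def d2_def
    by (simp add: complex_eq_iff algebra_simps)
  show "integrable M (\<lambda>w. Complex (L (\<alpha> a) w) (L (\<beta> a) w) * cnj (Complex (L (\<alpha> b) w) (L (\<beta> b) w))
              * Complex (L (\<alpha> c') w) (L (\<beta> c') w) * cnj (Complex (L (\<alpha> d) w) (L (\<beta> d) w)))"
    unfolding eq4 by (intro integrable_Complex)
      (simp_all add: I4' a1_def a2_def b1_def b2_def c1_def c2_def d1_def d2_def)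
  have "integral\<^sup>L M (\<lambda>w. Complex (L (\<alpha> a) w) (L (\<beta> a) w) * cnj (Complex (L (\<alpha> b) w) (L (\<beta> b) w))
              * Complex (L (\<alpha> c') w) (L (\<beta> c') w) * cnj (Complex (L (\<alpha> d) w) (L (\<beta> d) w)))
    = Complex (Re (c a b) * Re (c c' d) - Im (c a b) * Im (c c' d) + Re (c a d) * Re (c b c') + Im (c a d) * Im (c b c'))
              (Re (c a b) * Im (c c' d) + Im (c a b) * Re (c c' d) - Re (c a d) * Im (c b c') + Im (c a d) * Re (c b c'))"
    unfolding eq4
    apply (subst integral_Complex)
      apply (simp_all add: I4' a1_def a2_def b1_def b2_def c1_def c2_def d1_def d2_def)
    apply (simp add: I4' E4' integral_add integral_diff Baa Bbb Bab Bba)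
    done
  also have "\<dots> = c a b * c c' d + c a d * c c' b"
    using herm[of b c'] by (simp add: complex_eq_iff)
  finally show "integral\<^sup>L M (\<lambda>w. Complex (L (\<alpha> a) w) (L (\<beta> a) w) * cnj (Complex (L (\<alpha> b) w) (L (\<beta> b) w))
              * Complex (L (\<alpha> c') w) (L (\<beta> c') w) * cnj (Complex (L (\<alpha> d) w) (L (\<beta> d) w)))
         = c a b * c c' d + c a d * c c' b" .
qed

definition L2 :: "'w measure \<Rightarrow> ('w \<Rightarrow> complex) \<Rightarrow> bool" where
  "L2 M f \<longleftrightarrow> f \<in> borel_measurable M \<and> integrable M (\<lambda>w. (cmod (f w))^2)"

lemma borel_measurable_cnj'[measurable (raw)]:
  "f \<in> borel_measurable M \<Longrightarrow> (\<lambda>x. cnj (f x)) \<in> borel_measurable M"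
  by (rule borel_measurable_continuous_on[OF continuous_on_cnj[OF continuous_on_id]])

lemma borel_measurable_vec_nth'[measurable (raw)]:
  "f \<in> borel_measurable M \<Longrightarrow> (\<lambda>x. f x $ i) \<in> borel_measurable M"
  by (rule borel_measurable_continuous_on[OF continuous_on_component[OF continuous_on_id]])

lemma borel_measurable_mv'[measurable (raw)]:
  fixes A :: "complex^'n^'m"
  shows "f \<in> borel_measurable M \<Longrightarrow> (\<lambda>x. (A *v f x) $ i) \<in> borel_measurable M"
  unfolding matrix_vector_mult_def by simp

lemma cmod_add_sq: "(cmod (a + b))^2 \<le> 2 * (cmod a)^2 + 2 * (cmod b)^2"
proof -
  have "cmod (a + b) \<le> cmod a + cmod b" by (rule norm_triangle_ineq)
  then have "(cmod (a + b))^2 \<le> (cmod a + cmod b)^2"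
    by (simp add: power_mono)
  moreover have "0 \<le> (cmod a - cmod b)^2" by simp
  ultimately show ?thesis by (simp add: power2_eq_square algebra_simps)
qed

lemma cmod_mult_le: "cmod (a * b) \<le> (cmod a)^2 + (cmod b)^2"
  using ineq_ab[of "cmod a" "cmod b"] by (simp add: norm_mult)

context prob_space
begin

lemma L2_const[simp, intro]: "L2 M (\<lambda>w. c)"
  unfolding L2_def by simp

lemma L2_add[intro]:
  assumes "L2 M f" "L2 M g" shows "L2 M (\<lambda>w. f w + g w)"
proof -
  have m: "f \<in> borel_measurable M" "g \<in> borel_measurable M"
    and i: "integrable M (\<lambda>w. (cmod (f w))^2)" "integrable M (\<lambda>w. (cmod (g w))^2)"
    using assms unfolding L2_def by auto
  have "integrable M (\<lambda>w. (cmod (f w + g w))^2)"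
  proof (rule Bochner_Integration.integrable_bound[of _ "\<lambda>w. 2 * (cmod (f w))^2 + 2 * (cmod (g w))^2"])
    show "integrable M (\<lambda>w. 2 * (cmod (f w))^2 + 2 * (cmod (g w))^2)" using i by simp
    show "(\<lambda>w. (cmod (f w + g w))^2) \<in> borel_measurable M" using m by measurable
    show "AE w in M. norm ((cmod (f w + g w))^2) \<le> norm (2 * (cmod (f w))^2 + 2 * (cmod (g w))^2)"
    proof (intro AE_I2)
      fix w
      have "0 \<le> 2 * (cmod (f w))^2 + 2 * (cmod (g w))^2" by simp
      then show "norm ((cmod (f w + g w))^2) \<le> norm (2 * (cmod (f w))^2 + 2 * (cmod (g w))^2)"
        using cmod_add_sq[of "f w" "g w"] by simp
    qed
  qed
  moreover have "(\<lambda>w. f w + g w) \<in> borel_measurable M" using m by measurable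
  ultimately show ?thesis unfolding L2_def by simp
qed

lemma L2_cmult[intro]: assumes "L2 M f" shows "L2 M (\<lambda>w. c * f w)"
proof -
  have m: "f \<in> borel_measurable M" and i: "integrable M (\<lambda>w. (cmod (f w))^2)"
    using assms unfolding L2_def by auto
  have "(\<lambda>w. c * f w) \<in> borel_measurable M" using m by measurable
  then show ?thesis unfolding L2_def using i by (simp add: norm_mult power_mult_distrib)
qed

lemma L2_uminus[intro]: "L2 M f \<Longrightarrow> L2 M (\<lambda>w. - f w)"
  using L2_cmult[of f "-1"] by simp

lemma L2_diff[intro]: "L2 M f \<Longrightarrow> L2 M g \<Longrightarrow> L2 M (\<lambda>w. f w - g w)"
  using L2_add[of f "\<lambda>w. - g w"] L2_uminus[of g] by simp

lemma L2_sum[intro]: "(\<And>i. i \<in> I \<Longrightarrow> L2 M (f i)) \<Longrightarrow> L2 M (\<lambda>w. \<Sum>i\<in>I. f i w)"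
proof (induction I rule: infinite_finite_induct)
  case (insert x F)
  then show ?case by (simp add: L2_add)
qed simp_all

lemma L2_mult_integrable[intro]:
  assumes "L2 M f" "L2 M g" shows "integrable M (\<lambda>w. f w * g w)"
proof -
  have m: "f \<in> borel_measurable M" "g \<in> borel_measurable M"
    and i: "integrable M (\<lambda>w. (cmod (f w))^2)" "integrable M (\<lambda>w. (cmod (g w))^2)"
    using assms unfolding L2_def by auto
  show ?thesis
  proof (rule Bochner_Integration.integrable_bound[of _ "\<lambda>w. (cmod (f w))^2 + (cmod (g w))^2"])
    show "integrable M (\<lambda>w. (cmod (f w))^2 + (cmod (g w))^2)" using i by simp
    show "(\<lambda>w. f w * g w) \<in> borel_measurable M" using m by measurable
    show "AE w in M. norm (f w * g w) \<le> norm ((cmod (f w))^2 + (cmod (g w))^2)"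
    proof (intro AE_I2)
      fix w
      have "0 \<le> (cmod (f w))^2 + (cmod (g w))^2" by simp
      then show "norm (f w * g w) \<le> norm ((cmod (f w))^2 + (cmod (g w))^2)"
        using cmod_mult_le[of "f w" "g w"] by simp
    qed
  qed
qed

lemma L2_cnj[intro]: assumes "L2 M f" shows "L2 M (\<lambda>w. cnj (f w))"
proof -
  have m: "f \<in> borel_measurable M" and i: "integrable M (\<lambda>w. (cmod (f w))^2)"
    using assms unfolding L2_def by auto
  have "(\<lambda>w. cnj (f w)) \<in> borel_measurable M" using m by measurable
  then show ?thesis unfolding L2_def using i by simp
qed

lemma L2_sq_integrable: "L2 M f \<Longrightarrow> integrable M (\<lambda>w. (cmod (f w))^2)"
  unfolding L2_def by simp

lemma L2_I:
  assumes "f \<in> borel_measurable M" "integrable M (\<lambda>w. f w * cnj (f w))"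
  shows "L2 M f"
proof -
  have "integrable M (\<lambda>w. cmod (f w * cnj (f w)))" using assms(2) by (rule integrable_norm)
  then show ?thesis unfolding L2_def using assms(1) by (simp add: norm_mult power2_eq_square)
qed

lemma L2_of_real:
  fixes g :: "'a \<Rightarrow> real"
  assumes "g \<in> borel_measurable M" "integrable M (\<lambda>w. (g w)^2)"
  shows "L2 M (\<lambda>w. complex_of_real (g w))"
  unfolding L2_def using assms by simp

end

lemma indep3_G:
  fixes X :: "'w \<Rightarrow> 'a::topological_space" and Y :: "'w \<Rightarrow> 'b::topological_space" and Z :: "'w \<Rightarrow> 'c::topological_space"
  assumes P: "prob_space M" and "indep3 M X Y Z"
  shows "prob_space.indep_sets M (\<lambda>i::nat. if i = 0 then {X -` A \<inter> space M | A. A \<in> sets borel}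
                 else if i = 1 then {Y -` A \<inter> space M | A. A \<in> sets borel}
                 else {Z -` A \<inter> space M | A. A \<in> sets borel}) {0, 1, 2}"
proof -
  have e: "\<And>(X :: 'w \<Rightarrow> 'd::topological_space). sets (vimage_algebra (space M) X borel) = {X -` A \<inter> space M | A. A \<in> sets borel}"
    by (rule sets_vimage_algebra2) simp
  show ?thesis using assms(2) unfolding indep3_def e .
qed

lemma (in prob_space) indep_var_from_sets:
  fixes F G :: "'a \<Rightarrow> 'd::topological_space"
  assumes I: "indep_set SA SB"
    and F: "F \<in> borel_measurable M" and G: "G \<in> borel_measurable M"
    and FA: "{F -` A \<inter> space M | A. A \<in> sets borel} \<subseteq> SA"
    and GB: "{G -` A \<inter> space M | A. A \<in> sets borel} \<subseteq> SB"
  shows "indep_var borel F borel G"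
proof -
  have "indep_sets (case_bool SA SB) UNIV" using I unfolding indep_set_def .
  then have "indep_sets (case_bool {F -` A \<inter> space M | A. A \<in> sets borel} {G -` A \<inter> space M | A. A \<in> sets borel}) UNIV"
    by (rule indep_sets_mono_sets) (use FA GB in \<open>auto split: bool.split\<close>)
  then have "indep_set {F -` A \<inter> space M | A. A \<in> sets borel} {G -` A \<inter> space M | A. A \<in> sets borel}"
    unfolding indep_set_def .
  then have "indep_set (sigma_sets (space M) {F -` A \<inter> space M | A. A \<in> sets borel})
       (sigma_sets (space M) {G -` A \<inter> space M | A. A \<in> sets borel})"
    by (rule indep_set_sigma_sets) (auto intro!: Int_stableI, (metis vimage_Int Int_assoc Int_left_commute Int_absorb sets.Int)+)
  then show ?thesis unfolding indep_var_eq using F G by simp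
qed

lemma indep3_01:
  fixes X :: "'w \<Rightarrow> 'a::topological_space" and Y :: "'w \<Rightarrow> 'b::topological_space" and Z :: "'w \<Rightarrow> 'c::topological_space"
    and f :: "'a \<Rightarrow> 'd::topological_space" and g :: "'b \<Rightarrow> 'd"
  assumes P: "prob_space M" and I: "indep3 M X Y Z"
    and X: "X \<in> borel_measurable M" and Y: "Y \<in> borel_measurable M"
    and f: "f \<in> borel_measurable borel" and g: "g \<in> borel_measurable borel"
  shows "prob_space.indep_var M borel (\<lambda>w. f (X w)) borel (\<lambda>w. g (Y w))"
proof -
  interpret prob_space M by fact
  note G = indep3_G[OF P I]
  have ev: "{X -` A \<inter> space M | A. A \<in> sets borel} \<subseteq> events" "{Y -` A \<inter> space M | A. A \<in> sets borel} \<subseteq> events"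
    using X Y by (auto simp: measurable_sets)
  have "indep_set {X -` A \<inter> space M | A. A \<in> sets borel} {Y -` A \<inter> space M | A. A \<in> sets borel}"
    unfolding indep_sets2_eq
  proof (intro conjI ev ballI)
    fix a b assume a: "a \<in> {X -` A \<inter> space M | A. A \<in> sets borel}" and b: "b \<in> {Y -` A \<inter> space M | A. A \<in> sets borel}"
    have "prob (\<Inter>j\<in>{0::nat,1}. (if j = 0 then a else b)) = (\<Prod>j\<in>{0::nat,1}. prob (if j = 0 then a else b))"
      by (rule indep_setsD[OF G]) (use a b in auto)
    then show "prob (a \<inter> b) = prob a * prob b" by (simp add: Int_commute)
  qed
  then show ?thesis
  proof (rule indep_var_from_sets)
    show "(\<lambda>w. f (X w)) \<in> borel_measurable M" "(\<lambda>w. g (Y w)) \<in> borel_measurable M"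
      using X Y f g by measurable
    show "{(\<lambda>w. f (X w)) -` A \<inter> space M |A. A \<in> sets borel} \<subseteq> {X -` A \<inter> space M |A. A \<in> sets borel}"
    proof safe
      fix A :: "'d set" assume "A \<in> sets borel"
      then have "f -` A \<in> sets borel" using f measurable_sets[OF f] by (metis space_borel vimage_Int Int_UNIV_right inf_top.right_neutral)
      then show "\<exists>B. (\<lambda>w. f (X w)) -` A \<inter> space M = X -` B \<inter> space M \<and> B \<in> sets borel"
        by (intro exI[of _ "f -` A"]) auto
    qed
    show "{(\<lambda>w. g (Y w)) -` A \<inter> space M |A. A \<in> sets borel} \<subseteq> {Y -` A \<inter> space M |A. A \<in> sets borel}"
    proof safe
      fix A :: "'d set" assume "A \<in> sets borel"
      then have "g -` A \<in> sets borel" using g measurable_sets[OF g] by (metis space_borel vimage_Int Int_UNIV_right inf_top.right_neutral)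
      then show "\<exists>B. (\<lambda>w. g (Y w)) -` A \<inter> space M = Y -` B \<inter> space M \<and> B \<in> sets borel"
        by (intro exI[of _ "g -` A"]) auto
    qed
  qed
qed

lemma indep3_pair:
  fixes X :: "'w \<Rightarrow> 'a::second_countable_topology" and Y :: "'w \<Rightarrow> 'b::second_countable_topology" and Z :: "'w \<Rightarrow> 'c::topological_space"
    and f :: "'a \<times> 'b \<Rightarrow> 'd::topological_space" and g :: "'c \<Rightarrow> 'd"
  assumes P: "prob_space M" and I: "indep3 M X Y Z"
    and X: "X \<in> borel_measurable M" and Y: "Y \<in> borel_measurable M" and Z: "Z \<in> borel_measurable M"
    and f: "f \<in> borel_measurable borel" and g: "g \<in> borel_measurable borel"
  shows "prob_space.indep_var M borel (\<lambda>w. f (X w, Y w)) borel (\<lambda>w. g (Z w))"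
proof -
  interpret prob_space M by fact
  define E where "E = (\<lambda>i::nat. if i = 0 then {X -` A \<inter> space M | A. A \<in> sets borel}
                 else if i = 1 then {Y -` A \<inter> space M | A. A \<in> sets borel}
                 else {Z -` A \<inter> space M | A. A \<in> sets borel})"
  have G: "indep_sets E {0,1,2}" using indep3_G[OF P I] unfolding E_def .
  define J where "J = (\<lambda>j::bool. if j then {0::nat,1} else {2})"
  have U: "(\<Union>j. J j) = {0,1,2}" unfolding J_def by auto
  have "indep_sets (\<lambda>j. sigma_sets (space M) (\<Union>i\<in>J j. E i)) UNIV"
  proof (rule indep_sets_collect_sigma)
    show "indep_sets E (\<Union>j\<in>UNIV. J j)" using G U by simp
    show "disjoint_family_on J UNIV" unfolding J_def disjoint_family_on_def by auto
    fix i j assume "j \<in> (UNIV::bool set)" "i \<in> J j"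
    show "Int_stable (E i)"
      unfolding E_def
      by (auto intro!: Int_stableI, (metis vimage_Int Int_assoc Int_left_commute Int_absorb sets.Int)+)
  qed
  moreover have "(\<lambda>j. sigma_sets (space M) (\<Union>i\<in>J j. E i)) = case_bool (sigma_sets (space M) (E 0 \<union> E 1)) (sigma_sets (space M) (E 2))"
    unfolding J_def by (auto simp: fun_eq_iff split: bool.split)
  ultimately have ind: "indep_set (sigma_sets (space M) (E 0 \<union> E 1)) (sigma_sets (space M) (E 2))"
    unfolding indep_set_def by simp
  show ?thesis
  proof (rule indep_var_from_sets[OF ind])
    show "(\<lambda>w. f (X w, Y w)) \<in> borel_measurable M" "(\<lambda>w. g (Z w)) \<in> borel_measurable M"
      using X Y Z f g by measurable
    define N where "N = sigma (space M) (E 0 \<union> E 1)"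
    have sub: "E 0 \<union> E 1 \<subseteq> Pow (space M)" unfolding E_def by auto
    have sN: "sets N = sigma_sets (space M) (E 0 \<union> E 1)" "space N = space M"
      unfolding N_def using sub by (simp_all add: sets_measure_of space_measure_of)
    have XN: "X \<in> measurable N borel"
      unfolding measurable_def using sN by (auto simp: E_def)
    have YN: "Y \<in> measurable N borel"
      unfolding measurable_def using sN by (auto simp: E_def)
    have "(\<lambda>w. (X w, Y w)) \<in> measurable N (borel \<Otimes>\<^sub>M borel)"
      using XN YN by (rule measurable_Pair)
    then have PN: "(\<lambda>w. (X w, Y w)) \<in> measurable N borel" by (simp add: borel_prod)
    then have fN: "(\<lambda>w. f (X w, Y w)) \<in> measurable N borel" using f by measurable
    show "{(\<lambda>w. f (X w, Y w)) -` A \<inter> space M |A. A \<in> sets borel} \<subseteq> sigma_sets (space M) (E 0 \<union> E 1)"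
    proof safe
      fix A :: "'d set" assume "A \<in> sets borel"
      then have "(\<lambda>w. f (X w, Y w)) -` A \<inter> space N \<in> sets N" using fN by (rule measurable_sets[rotated])
      then show "(\<lambda>w. f (X w, Y w)) -` A \<inter> space M \<in> sigma_sets (space M) (E 0 \<union> E 1)" using sN by simp
    qed
    show "{(\<lambda>w. g (Z w)) -` A \<inter> space M |A. A \<in> sets borel} \<subseteq> sigma_sets (space M) (E 2)"
    proof safe
      fix A :: "'d set" assume "A \<in> sets borel"
      then have "g -` A \<in> sets borel" using g measurable_sets[OF g] by (metis space_borel vimage_Int Int_UNIV_right inf_top.right_neutral)
      then have "(\<lambda>w. g (Z w)) -` A \<inter> space M \<in> E 2" unfolding E_def by (auto intro!: exI[of _ "g -` A"])
      then show "(\<lambda>w. g (Z w)) -` A \<inter> space M \<in> sigma_sets (space M) (E 2)" by auto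
    qed
  qed
qed

definition hdot :: "complex^'n \<Rightarrow> complex^'n \<Rightarrow> complex" where
  "hdot w v = (\<Sum>i\<in>UNIV. cnj (w $ i) * v $ i)"

definition hform :: "complex^'n^'n \<Rightarrow> complex^'n \<Rightarrow> complex^'n \<Rightarrow> complex" where
  "hform C w v = (\<Sum>i\<in>UNIV. \<Sum>j\<in>UNIV. cnj (w $ i) * C $ i $ j * v $ j)"

definition vsc :: "complex \<Rightarrow> complex^'n \<Rightarrow> complex^'n" where
  "vsc c v = (\<chi> i. c * v $ i)"

lemma cscgD:
  assumes "cscg_vec M z C"
  shows "z \<in> borel_measurable M" "\<And>i j. C $ i $ j = cnj (C $ j $ i)"
    "0 \<le> Re (hform C w w) / 2"
    "distr M borel (\<lambda>\<omega>. Re (hdot w (z \<omega>))) = gauss_measure 0 (Re (hform C w w) / 2)"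
proof -
  have H: "z \<in> borel_measurable M \<and> (\<forall>i j. C $ i $ j = cnj (C $ j $ i)) \<and>
     (\<forall>w. 0 \<le> Re (hform C w w) / 2 \<and> distr M borel (\<lambda>\<omega>. Re (hdot w (z \<omega>))) = gauss_measure 0 (Re (hform C w w) / 2))"
    using assms unfolding cscg_vec_def Let_def hdot_def[symmetric] hform_def[symmetric] .
  then show "z \<in> borel_measurable M" "\<And>i j. C $ i $ j = cnj (C $ j $ i)"
    "0 \<le> Re (hform C w w) / 2"
    "distr M borel (\<lambda>\<omega>. Re (hdot w (z \<omega>))) = gauss_measure 0 (Re (hform C w w) / 2)" by blast+
qed

lemma hdot_add_left: "hdot (a + b) v = hdot a v + hdot b v"
  unfolding hdot_def by (simp add: sum.distrib algebra_simps)
lemma hdot_add_right: "hdot w (a + b) = hdot w a + hdot w b"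
  unfolding hdot_def by (simp add: sum.distrib algebra_simps)
lemma hdot_cnj: "hdot b a = cnj (hdot a b)"
  unfolding hdot_def by (simp add: mult.commute)
lemma hform_add_left: "hform C (a + b) v = hform C a v + hform C b v"
  unfolding hform_def by (simp add: sum.distrib distrib_left distrib_right)
lemma hform_add_right: "hform C w (a + b) = hform C w a + hform C w b"
  unfolding hform_def by (simp add: sum.distrib distrib_left distrib_right)
lemma hform_herm:
  assumes "\<And>i j. C $ i $ j = cnj (C $ j $ i)"
  shows "hform C b a = cnj (hform C a b)"
proof -
  have c: "\<And>i j. cnj (C $ i $ j) = C $ j $ i" using assms by (metis complex_cnj_cnj)
  have "cnj (hform C a b) = (\<Sum>i\<in>UNIV. \<Sum>j\<in>UNIV. cnj (b $ j) * C $ j $ i * a $ i)"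
    unfolding hform_def by (simp add: c mult.commute mult.left_commute)
  also have "\<dots> = hform C b a" unfolding hform_def by (rule sum.swap)
  finally show ?thesis by simp
qed
lemma hform_id: "hform (s *\<^sub>R mat 1) w v = of_real s * hdot w v"
proof -
  have "\<And>i j. cnj (w $ i) * (s *\<^sub>R mat 1) $ i $ j * v $ j = (if j = i then s *\<^sub>R (cnj (w $ i) * v $ i) else 0)"
    by (simp add: mat_def vector_scaleR_component)
  then have "hform (s *\<^sub>R mat 1) w v = s *\<^sub>R hdot w v" unfolding hform_def hdot_def by (simp add: scaleR_sum_right)
  then show ?thesis by (simp add: scaleR_conv_of_real)
qed
lemma hdot_mv: "hdot w (A *v v) = hdot (cadj A *v w) v"
proof -
  have "hdot w (A *v v) = (\<Sum>m\<in>UNIV. \<Sum>i\<in>UNIV. cnj (w $ m) * A $ m $ i * v $ i)"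
    unfolding hdot_def matrix_vector_mult_def by (simp add: sum_distrib_left mult.assoc)
  also have "\<dots> = (\<Sum>i\<in>UNIV. \<Sum>m\<in>UNIV. cnj (w $ m) * A $ m $ i * v $ i)" by (rule sum.swap)
  also have "\<dots> = hdot (cadj A *v w) v"
    unfolding hdot_def matrix_vector_mult_def cadj_def by (simp add: sum_distrib_right sum_distrib_left mult.commute mult.left_commute)
  finally show ?thesis .
qed
lemma hdot_vsc_left: "hdot (vsc c a) v = cnj c * hdot a v"
  unfolding hdot_def vsc_def by (simp add: sum_distrib_left mult.assoc)
lemma hdot_vsc_right: "hdot w (vsc c v) = c * hdot w v"
  unfolding hdot_def vsc_def by (simp add: sum_distrib_left mult.left_commute)
lemma hform_vsc_left: "hform C (vsc c a) v = cnj c * hform C a v"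
  unfolding hform_def vsc_def by (simp add: sum_distrib_left mult.assoc)
lemma hform_vsc_right: "hform C w (vsc c v) = c * hform C w v"
  unfolding hform_def vsc_def by (simp add: sum_distrib_left mult.left_commute mult.assoc)
lemma mv_vsc:
  fixes B :: "complex^'a^'b" and v :: "complex^'a"
  shows "B *v (vsc c v) = vsc c (B *v v)"
  unfolding vsc_def matrix_vector_mult_def by (simp add: vec_eq_iff sum_distrib_left mult.left_commute)
lemma vsc_add: "vsc c (a + b) = vsc c a + vsc c b"
  unfolding vsc_def by (simp add: vec_eq_iff distrib_left)
lemma vsc_zero[simp]: "vsc c 0 = 0"
  unfolding vsc_def by (simp add: vec_eq_iff)
lemma hdot_axis_left: "hdot (axis k c) v = cnj c * v $ k"
proof -
  have "\<And>i. cnj (axis k c $ i) * v $ i = (if i = k then cnj c * v $ k else 0)" by (simp add: axis_def)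
  then show ?thesis unfolding hdot_def by simp
qed
lemma hdot_axis_right: "hdot w (axis k c) = cnj (w $ k) * c"
proof -
  have "\<And>i. cnj (w $ i) * axis k c $ i = (if i = k then cnj (w $ k) * c else 0)" by (simp add: axis_def)
  then show ?thesis unfolding hdot_def by simp
qed
lemma hform_axis: "hform C (axis k a) (axis l b) = cnj a * C $ k $ l * b"
proof -
  have "\<And>i j. cnj (axis k a $ i) * C $ i $ j * axis l b $ j = (if j = l then (if i = k then cnj a * C $ k $ l * b else 0) else 0)"
    by (simp add: axis_def)
  then show ?thesis unfolding hform_def by simp
qed
lemma vsc_axis: "vsc c (axis k a) = axis k (c * a)"
  unfolding vsc_def axis_def by (simp add: vec_eq_iff)
lemma cadj_axis: "(cadj A *v axis k c) $ i = cnj (A $ k $ i) * c"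
proof -
  have "\<And>j. cadj A $ i $ j * axis k c $ j = (if j = k then cnj (A $ k $ i) * c else 0)" by (simp add: axis_def cadj_def)
  then show ?thesis unfolding matrix_vector_mult_def by simp
qed

lemma hdot_zero_left[simp]: "hdot 0 v = 0" unfolding hdot_def by simp
lemma hdot_zero_right[simp]: "hdot w 0 = 0" unfolding hdot_def by simp
lemma hform_zero_left[simp]: "hform C 0 v = 0" unfolding hform_def by simp
lemma hform_zero_right[simp]: "hform C w 0 = 0" unfolding hform_def by simp

lemma hdot_measurable[measurable (raw)]:
  "f \<in> borel_measurable M \<Longrightarrow> (\<lambda>x. hdot w (f x)) \<in> borel_measurable M"
  unfolding hdot_def by measurable

lemma cont_mv: "continuous_on UNIV (\<lambda>v::complex^'n. (A::complex^'n^'m) *v v)"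
proof -
  have "(\<lambda>v::complex^'n. A *v v) = (\<lambda>v. \<chi> i. \<Sum>j\<in>UNIV. A$i$j * v$j)"
    by (auto simp: matrix_vector_mult_def)
  moreover have "continuous_on UNIV (\<lambda>v::complex^'n. \<chi> i. \<Sum>j\<in>UNIV. A$i$j * v$j)"
    by (intro continuous_on_vec_lambda continuous_on_sum continuous_on_mult continuous_on_const continuous_on_component continuous_on_id)
  ultimately show ?thesis by simp
qed

locale TS =
  fixes M :: "'w measure" and A :: "complex^'n^'m" and \<sigma>x :: real
    and x :: "'w \<Rightarrow> complex^'n" and ez :: "'w \<Rightarrow> complex^'m" and ey :: "'w \<Rightarrow> real^'m"
    and Cez :: "complex^'m^'m" and eybar :: "real^'m" and Cey :: "real^'m^'m"
  assumes P: "prob_space M"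
    and hx: "cscg_vec M x (\<sigma>x\<^sup>2 *\<^sub>R mat 1 :: complex^'n^'n)"
    and hz: "cscg_vec M ez Cez"
    and hy: "real_gaussian_vec M ey eybar Cey"
    and hi: "indep3 M x ez ey"
begin

sublocale prob_space M by (rule P)

lemma x_meas[measurable]: "x \<in> borel_measurable M" using cscgD(1)[OF hx] .
lemma ez_meas[measurable]: "ez \<in> borel_measurable M" using cscgD(1)[OF hz] .
lemma ey_meas[measurable]: "ey \<in> borel_measurable M" using hy unfolding real_gaussian_vec_def by blast
lemma Cez_herm: "Cez $ i $ j = cnj (Cez $ j $ i)" using cscgD(2)[OF hz] .
lemma Cey_sym: "Cey $ i $ j = Cey $ j $ i" using hy unfolding real_gaussian_vec_def by blast

definition z :: "'w \<Rightarrow> complex^'m" where "z w = A *v x w + ez w"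
definition w1 :: "(complex^'n) \<times> (complex^'m) \<Rightarrow> complex^'n" where "w1 p = fst p + cadj A *v snd p"
definition L :: "(complex^'n) \<times> (complex^'m) \<Rightarrow> 'w \<Rightarrow> real" where
  "L p w = Re (hdot (fst p) (x w)) + Re (hdot (snd p) (z w))"
definition S :: "(complex^'n) \<times> (complex^'m) \<Rightarrow> (complex^'n) \<times> (complex^'m) \<Rightarrow> complex" where
  "S p q = of_real (\<sigma>x\<^sup>2) * hdot (w1 p) (w1 q) + hform Cez (snd p) (snd q)"
definition B :: "(complex^'n) \<times> (complex^'m) \<Rightarrow> (complex^'n) \<times> (complex^'m) \<Rightarrow> real" where
  "B p q = Re (S p q) / 2"

lemma z_meas[measurable]: "z \<in> borel_measurable M"
proof -
  have "(\<lambda>w. A *v x w) \<in> borel_measurable M" by (rule borel_measurable_continuous_on[OF cont_mv x_meas])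
  then show ?thesis unfolding z_def[abs_def] by measurable
qed

lemma L_alt: "L p w = Re (hdot (w1 p) (x w)) + Re (hdot (snd p) (ez w))"
  by (simp add: L_def z_def w1_def hdot_add_right hdot_add_left hdot_mv)

lemma L_meas[measurable]: "L p \<in> borel_measurable M"
  unfolding L_alt[abs_def] by measurable

lemma L_distr: "distr M borel (L p) = gauss_measure 0 (B p p)"
proof -
  let ?C = "(\<sigma>x\<^sup>2 *\<^sub>R mat 1 :: complex^'n^'n)"
  have d1: "distr M borel (\<lambda>w. Re (hdot (w1 p) (x w))) = gauss_measure 0 (Re (hform ?C (w1 p) (w1 p)) / 2)"
    by (rule cscgD(4)[OF hx])
  have d2: "distr M borel (\<lambda>w. Re (hdot (snd p) (ez w))) = gauss_measure 0 (Re (hform Cez (snd p) (snd p)) / 2)"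
    by (rule cscgD(4)[OF hz])
  have ind: "indep_var borel (\<lambda>w. Re (hdot (w1 p) (x w))) borel (\<lambda>w. Re (hdot (snd p) (ez w)))"
    by (rule indep3_01[OF P hi x_meas ez_meas]) measurable
  have "distr M borel (\<lambda>w. Re (hdot (w1 p) (x w)) + Re (hdot (snd p) (ez w)))
     = gauss_measure 0 (Re (hform ?C (w1 p) (w1 p)) / 2 + Re (hform Cez (snd p) (snd p)) / 2)"
    by (rule gauss_add[OF P _ _ ind d1 d2 cscgD(3)[OF hx] cscgD(3)[OF hz]]) measurable
  moreover have "Re (hform ?C (w1 p) (w1 p)) / 2 + Re (hform Cez (snd p) (snd p)) / 2 = B p p"
    unfolding B_def S_def hform_id by simp
  moreover have "(\<lambda>w. Re (hdot (w1 p) (x w)) + Re (hdot (snd p) (ez w))) = L p"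
    by (simp add: L_alt fun_eq_iff)
  ultimately show ?thesis by simp
qed

lemma B_nonneg: "0 \<le> B p p"
proof -
  let ?C = "(\<sigma>x\<^sup>2 *\<^sub>R mat 1 :: complex^'n^'n)"
  have "Re (hform ?C (w1 p) (w1 p)) / 2 + Re (hform Cez (snd p) (snd p)) / 2 = B p p"
    unfolding B_def S_def hform_id by simp
  then show ?thesis using cscgD(3)[OF hx, of "w1 p"] cscgD(3)[OF hz, of "snd p"] by linarith
qed

lemma L_add: "L (p + q) w = L p w + L q w"
  by (simp add: L_def hdot_add_left)

lemma w1_add: "w1 (p + q) = w1 p + w1 q"
  by (simp add: w1_def matrix_vector_right_distrib)

lemma S_add: "S (p + q) r = S p r + S q r"
  by (simp add: S_def w1_add hdot_add_left hform_add_left algebra_simps)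

lemma S_herm: "S q p = cnj (S p q)"
  unfolding S_def using hdot_cnj[of "w1 q" "w1 p"] hform_herm[of Cez "snd p" "snd q", OF Cez_herm]
  by simp

lemma B_add: "B (p + q) r = B p r + B q r"
  by (simp add: B_def S_add add_divide_distrib)

lemma B_sym: "B p q = B q p"
  by (simp add: B_def S_herm[of p q])

lemma L_moments:
  "integrable M (\<lambda>w. (L p w)^4)"
  "integral\<^sup>L M (\<lambda>w. (L p w)^2) = B p p"
  "integral\<^sup>L M (\<lambda>w. (L p w)^4) = 3 * (B p p)^2"
  using distr_moments[OF P L_meas L_distr B_nonneg, of p] by simp_all

end

context TS
begin

definition csc :: "complex \<Rightarrow> (complex^'n) \<times> (complex^'m) \<Rightarrow> (complex^'n) \<times> (complex^'m)" where
  "csc c p = (vsc c (fst p), vsc c (snd p))"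

lemma fst_csc[simp]: "fst (csc c p) = vsc c (fst p)" by (simp add: csc_def)
lemma snd_csc[simp]: "snd (csc c p) = vsc c (snd p)" by (simp add: csc_def)

lemma w1_csc: "w1 (csc c p) = vsc c (w1 p)"
  by (simp add: w1_def csc_def mv_vsc vsc_add)

lemma S_csc_left: "S (csc c p) q = cnj c * S p q"
  by (simp add: S_def w1_csc hdot_vsc_left hform_vsc_left algebra_simps)

lemma S_csc_right: "S p (csc c q) = c * S p q"
  by (simp add: S_def w1_csc hdot_vsc_right hform_vsc_right algebra_simps)

definition al :: "'n + 'm \<Rightarrow> (complex^'n) \<times> (complex^'m)" where
  "al p = (case p of Inl i \<Rightarrow> (axis i 1, 0) | Inr k \<Rightarrow> (0, axis k 1))"
definition be :: "'n + 'm \<Rightarrow> (complex^'n) \<times> (complex^'m)" where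
  "be p = csc \<i> (al p)"
definition cc :: "'n + 'm \<Rightarrow> 'n + 'm \<Rightarrow> complex" where
  "cc p q = S (al p) (al q)"
definition ux :: "'n + 'm \<Rightarrow> 'w \<Rightarrow> complex" where
  "ux p w = (case p of Inl i \<Rightarrow> x w $ i | Inr k \<Rightarrow> z w $ k)"

lemma U_eq: "Complex (L (al p) w) (L (be p) w) = ux p w"
proof (cases p)
  case (Inl i)
  then show ?thesis
    by (simp add: L_def al_def be_def csc_def ux_def hdot_axis_left vsc_axis complex_eq_iff)
next
  case (Inr k)
  then show ?thesis
    by (simp add: L_def al_def be_def csc_def ux_def hdot_axis_left vsc_axis complex_eq_iff)
qed

lemma cc_herm: "cc q p = cnj (cc p q)"
  unfolding cc_def by (rule S_herm)

lemma moments: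
  shows mom2_int: "integrable M (\<lambda>w. ux a w * cnj (ux b w))"
    and mom2: "integral\<^sup>L M (\<lambda>w. ux a w * cnj (ux b w)) = cc a b"
    and mom4_int: "integrable M (\<lambda>w. ux a w * cnj (ux b w) * ux c w * cnj (ux d w))"
    and mom4: "integral\<^sup>L M (\<lambda>w. ux a w * cnj (ux b w) * ux c w * cnj (ux d w)) = cc a b * cc c d + cc a d * cc c b"
proof -
  note G = complex_gauss_moments[OF P L_meas L_add B_add B_sym L_moments, of al cc be]
  have h1: "\<And>p q. B (al p) (al q) = Re (cc p q) / 2" by (simp add: B_def cc_def)
  have h2: "\<And>p q. B (be p) (be q) = Re (cc p q) / 2" by (simp add: B_def cc_def be_def S_csc_left S_csc_right)
  have h3: "\<And>p q. B (al p) (be q) = - Im (cc p q) / 2" by (simp add: B_def cc_def be_def S_csc_left S_csc_right)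
  have h4: "\<And>p q. B (be p) (al q) = Im (cc p q) / 2" by (simp add: B_def cc_def be_def S_csc_left S_csc_right)
  note G' = G[OF h1 h2 h3 h4 cc_herm, unfolded U_eq]
  show "integrable M (\<lambda>w. ux a w * cnj (ux b w))" by (rule G'(1))
  show "integral\<^sup>L M (\<lambda>w. ux a w * cnj (ux b w)) = cc a b" by (rule G'(2))
  show "integrable M (\<lambda>w. ux a w * cnj (ux b w) * ux c w * cnj (ux d w))" by (rule G'(3))
  show "integral\<^sup>L M (\<lambda>w. ux a w * cnj (ux b w) * ux c w * cnj (ux d w)) = cc a b * cc c d + cc a d * cc c b"
    by (rule G'(4))
qed

lemma cadj_nth: "cadj A $ i $ j = cnj (A $ j $ i)" by (simp add: cadj_def)

lemma cc_ll: "cc (Inl i) (Inl j) = (\<sigma>x\<^sup>2 *\<^sub>R mat 1 :: complex^'n^'n) $ i $ j"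
proof -
  have 1: "(\<sigma>x\<^sup>2 *\<^sub>R mat 1 :: complex^'n^'n) $ i $ j = \<sigma>x\<^sup>2 *\<^sub>R (if i = j then 1 else 0)" by (simp add: mat_def)
  have 2: "cc (Inl i) (Inl j) = of_real (\<sigma>x\<^sup>2) * (axis j 1 $ i)"
    by (simp add: cc_def S_def al_def w1_def hdot_axis_left)
  show ?thesis unfolding 1 2 by (simp add: axis_def scaleR_conv_of_real)
qed

lemma cc_lr: "cc (Inl i) (Inr k) = of_real (\<sigma>x\<^sup>2) * cnj (A $ k $ i)"
  by (simp add: cc_def S_def al_def w1_def hdot_axis_left cadj_axis)

lemma cc_rl: "cc (Inr k) (Inl j) = of_real (\<sigma>x\<^sup>2) * A $ k $ j"
  by (simp add: cc_def S_def al_def w1_def hdot_axis_right cadj_axis)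

lemma cc_rr: "cc (Inr k) (Inr l) = Cz_of \<sigma>x A Cez $ k $ l"
proof -
  have "hdot (cadj A *v axis k 1) (cadj A *v axis l 1) = (A ** cadj A) $ k $ l"
    unfolding hdot_def matrix_matrix_mult_def by (simp add: cadj_axis cadj_nth)
  moreover have "Cz_of \<sigma>x A Cez $ k $ l = \<sigma>x\<^sup>2 *\<^sub>R ((A ** cadj A) $ k $ l) + Cez $ k $ l"
    by (simp add: Cz_of_def)
  ultimately show ?thesis
    by (simp add: cc_def S_def al_def w1_def hform_axis scaleR_conv_of_real)
qed

end

lemma fst_bm[measurable (raw)]: "f \<in> borel_measurable M \<Longrightarrow> (\<lambda>x. fst (f x)) \<in> borel_measurable M"
  by (rule borel_measurable_continuous_on[OF continuous_on_fst[OF continuous_on_id]])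
lemma snd_bm[measurable (raw)]: "f \<in> borel_measurable M \<Longrightarrow> (\<lambda>x. snd (f x)) \<in> borel_measurable M"
  by (rule borel_measurable_continuous_on[OF continuous_on_snd[OF continuous_on_id]])

lemma inner_axis_vec: "(v::real^'n) \<bullet> axis k 1 = v $ k"
  by (simp add: cart_eq_inner_axis)

context TS
begin

definition Ly :: "real^'m \<Rightarrow> 'w \<Rightarrow> real" where "Ly a w = a \<bullet> ey w - a \<bullet> eybar"
definition By :: "real^'m \<Rightarrow> real^'m \<Rightarrow> real" where "By a b = a \<bullet> (Cey *v b)"
definition eyc :: "'m \<Rightarrow> 'w \<Rightarrow> real" where "eyc k w = ey w $ k - eybar $ k"

lemma hyD: "0 \<le> a \<bullet> (Cey *v a)" "distr M borel (\<lambda>w. a \<bullet> ey w) = gauss_measure (a \<bullet> eybar) (a \<bullet> (Cey *v a))"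
  using hy unfolding real_gaussian_vec_def by blast+

lemma Ly_meas[measurable]: "Ly a \<in> borel_measurable M"
  unfolding Ly_def[abs_def] by measurable

lemma Ly_moments:
  "integrable M (\<lambda>w. (Ly a w)^k)"
  "integral\<^sup>L M (\<lambda>w. Ly a w) = 0"
  "integral\<^sup>L M (\<lambda>w. (Ly a w)^2) = By a a"
  "integral\<^sup>L M (\<lambda>w. (Ly a w)^4) = 3 * (By a a)^2"
  using distr_moments[OF P _ hyD(2) hyD(1), of a] unfolding Ly_def By_def by (simp_all)

lemma By_sym: "By a b = By b a"
proof -
  have "By a b = (\<Sum>i\<in>UNIV. \<Sum>j\<in>UNIV. a $ i * Cey $ i $ j * b $ j)"
    unfolding By_def inner_vec_def matrix_vector_mult_def by (simp add: sum_distrib_left mult.assoc)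
  also have "\<dots> = (\<Sum>j\<in>UNIV. \<Sum>i\<in>UNIV. a $ i * Cey $ i $ j * b $ j)" by (rule sum.swap)
  also have "\<dots> = By b a"
    unfolding By_def inner_vec_def matrix_vector_mult_def by (simp add: sum_distrib_left Cey_sym mult.commute mult.left_commute)
  finally show ?thesis .
qed

lemma eyc_moments:
  shows eyc_int: "integrable M (eyc k)"
    and eyc_mean: "integral\<^sup>L M (eyc k) = 0"
    and eyc_sq_int: "integrable M (\<lambda>w. (eyc k w)^2)"
    and eyc2_int: "integrable M (\<lambda>w. eyc k w * eyc l w)"
    and eyc2: "integral\<^sup>L M (\<lambda>w. eyc k w * eyc l w) = Cey $ k $ l"
proof -
  have e: "\<And>k. eyc k = Ly (axis k 1)"
    by (auto simp: fun_eq_iff eyc_def Ly_def inner_commute[of "axis _ 1"] inner_axis_vec)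
  have La: "\<And>a b w. Ly (a + b) w = Ly a w + Ly b w" by (simp add: Ly_def inner_add_left)
  have Ba: "\<And>a b c. By (a + b) c = By a c + By b c" by (simp add: By_def inner_add_left)
  note G = gauss_family_moments[OF P Ly_meas La Ba By_sym Ly_moments(1) Ly_moments(3) Ly_moments(4)]
  have G': "integrable M (\<lambda>w. Ly (axis k 1) w * Ly (axis l 1) w) \<and>
    integral\<^sup>L M (\<lambda>w. Ly (axis k 1) w * Ly (axis l 1) w) = By (axis k 1) (axis l 1)"
    using G(1)[where a="axis k 1" and b="axis l 1"] G(2)[where a="axis k 1" and b="axis l 1"] by simp
  have "By (axis k 1) (axis l 1) = (Cey *v axis l 1) $ k" unfolding By_def by (metis inner_commute inner_axis_vec)
  also have "\<dots> = Cey $ k $ l" by (simp add: matrix_vector_mult_basis column_def)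
  finally have "By (axis k 1) (axis l 1) = Cey $ k $ l" .
  then show "integrable M (\<lambda>w. eyc k w * eyc l w)" "integral\<^sup>L M (\<lambda>w. eyc k w * eyc l w) = Cey $ k $ l"
    using G' unfolding e by auto
  show "integrable M (eyc k)" using Ly_moments(1)[of _ 1] unfolding e by simp
  show "integral\<^sup>L M (eyc k) = 0" using Ly_moments(2) unfolding e by simp
  show "integrable M (\<lambda>w. (eyc k w)^2)" using Ly_moments(1)[of _ 2] unfolding e by simp
qed

definition uxf :: "'n + 'm \<Rightarrow> complex^'n \<Rightarrow> complex^'m \<Rightarrow> complex" where
  "uxf p a b = (case p of Inl i \<Rightarrow> a $ i | Inr k \<Rightarrow> (A *v a + b) $ k)"

lemma ux_uxf: "ux p w = uxf p (x w) (ez w)"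
  by (cases p) (simp_all add: ux_def uxf_def z_def)

lemma uxf_meas: "(\<lambda>q. uxf p (fst q) (snd q)) \<in> borel_measurable borel"
  by (cases p) (simp_all add: uxf_def)

lemma indep_ux2:
  shows "integral\<^sup>L M (\<lambda>w. ux a w * cnj (ux b w) * complex_of_real (eyc l w)) = 0"
    and "integrable M (\<lambda>w. ux a w * cnj (ux b w) * complex_of_real (eyc l w))"
proof -
  define f where "f = (\<lambda>q. uxf a (fst q) (snd q) * cnj (uxf b (fst q) (snd q)))"
  define g where "g = (\<lambda>v::real^'m. complex_of_real (v $ l - eybar $ l))"
  have fm: "f \<in> borel_measurable borel" unfolding f_def using uxf_meas by measurable
  have gm: "g \<in> borel_measurable borel" unfolding g_def by measurable
  have I: "indep_var borel (\<lambda>w. f (x w, ez w)) borel (\<lambda>w. g (ey w))"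
    by (rule indep3_pair[OF P hi x_meas ez_meas ey_meas fm gm])
  have fx: "(\<lambda>w. f (x w, ez w)) = (\<lambda>w. ux a w * cnj (ux b w))" by (simp add: f_def ux_uxf)
  have gy: "(\<lambda>w. g (ey w)) = (\<lambda>w. complex_of_real (eyc l w))" by (simp add: g_def eyc_def)
  have i1: "integrable M (\<lambda>w. f (x w, ez w))" unfolding fx by (rule mom2_int)
  have i2: "integrable M (\<lambda>w. g (ey w))" unfolding gy using eyc_int by simp
  have fg: "(\<lambda>w. ux a w * cnj (ux b w) * complex_of_real (eyc l w)) = (\<lambda>w. f (x w, ez w) * g (ey w))"
    by (simp add: f_def g_def ux_uxf eyc_def)
  have "integral\<^sup>L M (\<lambda>w. g (ey w)) = 0" unfolding gy using eyc_mean by simp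
  then show "integral\<^sup>L M (\<lambda>w. ux a w * cnj (ux b w) * complex_of_real (eyc l w)) = 0"
    unfolding fg using indep_var_lebesgue_integral[OF I i1 i2] by simp
  show "integrable M (\<lambda>w. ux a w * cnj (ux b w) * complex_of_real (eyc l w))"
    unfolding fg using indep_var_integrable[OF I i1 i2] .
qed

end

context TS
begin

abbreviation "Cz \<equiv> Cz_of \<sigma>x A Cez"
abbreviation "TT \<equiv> T_of Cz Cey"
abbreviation "ybar \<equiv> ybar_of Cz eybar"

definition yv :: "'m \<Rightarrow> 'w \<Rightarrow> real" where
  "yv k w = (cmod ((A *v x w) $ k + ez w $ k))\<^sup>2 + ey w $ k"

definition Pk :: "'m \<Rightarrow> 'w \<Rightarrow> complex" where
  "Pk k w = ux (Inr k) w * cnj (ux (Inr k) w)"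

definition Xij :: "'n \<Rightarrow> 'n \<Rightarrow> 'w \<Rightarrow> complex" where
  "Xij i j w = ux (Inl i) w * cnj (ux (Inl j) w)"

definition ecx :: "'m \<Rightarrow> 'w \<Rightarrow> complex" where
  "ecx k w = complex_of_real (eyc k w)"

definition yt :: "'m \<Rightarrow> 'w \<Rightarrow> complex" where
  "yt k w = complex_of_real (yv k w - ybar $ k)"

lemma Cz_diag_real: "complex_of_real (Re (Cz $ k $ k)) = Cz $ k $ k"
proof -
  have "cc (Inr k) (Inr k) = cnj (cc (Inr k) (Inr k))" by (rule cc_herm)
  then have "Im (Cz $ k $ k) = 0" unfolding cc_rr by (simp add: complex_eq_iff)
  then show ?thesis by (simp add: complex_eq_iff)
qed

lemma yt_eq: "yt k w = (Pk k w - cc (Inr k) (Inr k)) + ecx k w"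
proof -
  have "complex_of_real ((cmod (ux (Inr k) w))\<^sup>2) = Pk k w" unfolding Pk_def by (rule complex_norm_square)
  then show ?thesis
    unfolding yt_def yv_def ecx_def eyc_def ybar_of_def cc_rr
    using Cz_diag_real[of k] by (simp add: ux_def z_def)
qed

lemma L2_ux2: "L2 M (\<lambda>w. ux a w * cnj (ux b w))"
proof (rule L2_I)
  show "(\<lambda>w. ux a w * cnj (ux b w)) \<in> borel_measurable M"
    using mom2_int[of a b] by (rule borel_measurable_integrable)
  have "(\<lambda>w. ux a w * cnj (ux b w) * cnj (ux a w * cnj (ux b w))) = (\<lambda>w. ux a w * cnj (ux b w) * ux b w * cnj (ux a w))"
    by (simp add: fun_eq_iff mult.commute mult.left_commute)
  then show "integrable M (\<lambda>w. ux a w * cnj (ux b w) * cnj (ux a w * cnj (ux b w)))"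
    using mom4_int[of a b b a] by simp
qed

lemma L2_Pk: "L2 M (Pk k)" unfolding Pk_def[abs_def] by (rule L2_ux2)
lemma L2_Xij: "L2 M (Xij i j)" unfolding Xij_def[abs_def] by (rule L2_ux2)
lemma L2_ecx: "L2 M (ecx k)" unfolding ecx_def[abs_def]
  by (rule L2_of_real) (use eyc_sq_int in \<open>auto intro: borel_measurable_integrable eyc_int\<close>)
lemma L2_yt: "L2 M (yt k)"
proof -
  have "yt k = (\<lambda>w. (Pk k w - cc (Inr k) (Inr k)) + ecx k w)" by (rule ext) (rule yt_eq)
  then show ?thesis by (simp only:) (intro L2_add L2_diff L2_const L2_Pk L2_ecx)
qed

lemma E_X: "integral\<^sup>L M (Xij i j) = (\<sigma>x\<^sup>2 *\<^sub>R mat 1 :: complex^'n^'n) $ i $ j"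
  unfolding Xij_def[abs_def] mom2 cc_ll ..

lemma E_P: "integral\<^sup>L M (Pk k) = cc (Inr k) (Inr k)"
  unfolding Pk_def[abs_def] mom2 ..

lemma E_ecx: "integral\<^sup>L M (ecx k) = 0"
  unfolding ecx_def[abs_def] using eyc_mean by simp

lemma int_P: "integrable M (Pk k)" unfolding Pk_def[abs_def] by (rule mom2_int)
lemma int_ecx: "integrable M (ecx k)" unfolding ecx_def[abs_def] using eyc_int by simp

lemma E_yt: "integral\<^sup>L M (yt k) = 0"
proof -
  have "yt k = (\<lambda>w. (Pk k w - cc (Inr k) (Inr k)) + ecx k w)" by (rule ext) (rule yt_eq)
  then have "integral\<^sup>L M (yt k) = integral\<^sup>L M (\<lambda>w. (Pk k w - cc (Inr k) (Inr k)) + ecx k w)"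
    by simp
  also have "\<dots> = 0" using int_P int_ecx E_P E_ecx by (simp add: integral_add integral_diff prob_space)
  finally show ?thesis .
qed

lemma E_Pe: "integral\<^sup>L M (\<lambda>w. Pk k w * ecx l w) = 0" "integrable M (\<lambda>w. Pk k w * ecx l w)"
  unfolding Pk_def ecx_def using indep_ux2 by auto
lemma E_Xe: "integral\<^sup>L M (\<lambda>w. Xij i j w * ecx l w) = 0" "integrable M (\<lambda>w. Xij i j w * ecx l w)"
  unfolding Xij_def ecx_def using indep_ux2 by auto
lemma E_ee: "integral\<^sup>L M (\<lambda>w. ecx k w * ecx l w) = of_real (Cey $ k $ l)" "integrable M (\<lambda>w. ecx k w * ecx l w)"
proof -
  have e: "(\<lambda>w. ecx k w * ecx l w) = (\<lambda>w. complex_of_real (eyc k w * eyc l w))" by (simp add: ecx_def fun_eq_iff)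
  have "integral\<^sup>L M (\<lambda>w. complex_of_real (eyc k w * eyc l w)) = of_real (integral\<^sup>L M (\<lambda>w. eyc k w * eyc l w))"
    by (rule integral_complex_of_real)
  then show "integral\<^sup>L M (\<lambda>w. ecx k w * ecx l w) = of_real (Cey $ k $ l)" unfolding e eyc2 .
  show "integrable M (\<lambda>w. ecx k w * ecx l w)" unfolding e by (rule integrable_of_real[OF eyc2_int])
qed
lemma E_PP: "integral\<^sup>L M (\<lambda>w. Pk k w * Pk l w) = cc (Inr k) (Inr k) * cc (Inr l) (Inr l) + cc (Inr k) (Inr l) * cc (Inr l) (Inr k)"
   "integrable M (\<lambda>w. Pk k w * Pk l w)"
  unfolding Pk_def using mom4[of "Inr k" "Inr k" "Inr l" "Inr l"] mom4_int[of "Inr k" "Inr k" "Inr l" "Inr l"]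
  by (simp_all add: mult.assoc)
lemma E_PX: "integral\<^sup>L M (\<lambda>w. Pk k w * Xij i j w) = cc (Inr k) (Inr k) * cc (Inl i) (Inl j) + cc (Inr k) (Inl j) * cc (Inl i) (Inr k)"
   "integrable M (\<lambda>w. Pk k w * Xij i j w)"
  unfolding Pk_def Xij_def using mom4[of "Inr k" "Inr k" "Inl i" "Inl j"] mom4_int[of "Inr k" "Inr k" "Inl i" "Inl j"]
  by (simp_all add: mult.assoc)

lemma E_yy: "integral\<^sup>L M (\<lambda>w. yt k w * yt l w) = of_real (TT $ k $ l)"
proof -
  let ?c = "\<lambda>k. cc (Inr k) (Inr k)"
  have eq: "(\<lambda>w. yt k w * yt l w) = (\<lambda>w. Pk k w * Pk l w - ?c k * Pk l w - ?c l * Pk k w + ?c k * ?c l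
      + Pk k w * ecx l w - ?c k * ecx l w + Pk l w * ecx k w - ?c l * ecx k w + ecx k w * ecx l w)"
    by (simp add: fun_eq_iff yt_eq algebra_simps)
  have "integral\<^sup>L M (\<lambda>w. yt k w * yt l w) = cc (Inr k) (Inr l) * cc (Inr l) (Inr k) + of_real (Cey $ k $ l)"
    unfolding eq using int_P int_ecx E_P E_ecx E_Pe E_ee E_PP
    by (simp add: integral_add integral_diff prob_space algebra_simps)
  also have "\<dots> = of_real (TT $ k $ l)"
    using cc_herm[of "Inr k" "Inr l"] unfolding cc_rr
    by (simp add: T_of_def complex_norm_square[symmetric] mult.commute)
  finally show ?thesis .
qed

lemma int_yy: "integrable M (\<lambda>w. yt k w * yt l w)"
  by (rule L2_mult_integrable[OF L2_yt L2_yt])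

lemma E_yX: "integral\<^sup>L M (\<lambda>w. yt k w * Xij i j w) = V_of \<sigma>x A k $ i $ j"
proof -
  let ?c = "\<lambda>k. cc (Inr k) (Inr k)"
  have eq: "(\<lambda>w. yt k w * Xij i j w) = (\<lambda>w. Pk k w * Xij i j w - ?c k * Xij i j w + Xij i j w * ecx k w)"
    by (simp add: fun_eq_iff yt_eq algebra_simps)
  have int_X: "integrable M (Xij i j)" unfolding Xij_def[abs_def] by (rule mom2_int)
  have "integral\<^sup>L M (\<lambda>w. yt k w * Xij i j w) = cc (Inr k) (Inl j) * cc (Inl i) (Inr k)"
    unfolding eq using int_X E_Xe E_PX mom2[of "Inl i" "Inl j", folded Xij_def]
    by (simp add: integral_add integral_diff prob_space algebra_simps)
  also have "\<dots> = V_of \<sigma>x A k $ i $ j"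
  proof -
    have "V_of \<sigma>x A k $ i $ j = (\<sigma>x ^ 4) *\<^sub>R (cnj (A $ k $ i) * A $ k $ j)"
      by (simp add: V_of_def couter_def arow_def)
    then show ?thesis unfolding cc_rl cc_lr by (simp add: scaleR_conv_of_real power2_eq_square power4_eq_xxxx)
  qed
  finally show ?thesis .
qed

end

locale TS2 = TS M A \<sigma>x x ez ey Cez eybar Cey
  for M :: "'w measure" and A :: "complex^'n^'m" and \<sigma>x :: real
    and x :: "'w \<Rightarrow> complex^'n" and ez :: "'w \<Rightarrow> complex^'m" and ey :: "'w \<Rightarrow> real^'m"
    and Cez :: "complex^'m^'m" and eybar :: "real^'m" and Cey :: "real^'m^'m" +
  assumes inv: "invertible (T_of (Cz_of \<sigma>x A Cez) Cey)"
begin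

abbreviation "Ti \<equiv> matrix_inv TT"
abbreviation "V \<equiv> V_of \<sigma>x A"
abbreviation "E0 \<equiv> (\<sigma>x\<^sup>2 *\<^sub>R mat 1 :: complex^'n^'n)"

lemma TiT: "Ti ** TT = mat 1"
proof -
  have "\<exists>A'. TT ** A' = mat 1 \<and> A' ** TT = mat 1" using inv unfolding invertible_def .
  then have "TT ** Ti = mat 1 \<and> Ti ** TT = mat 1" unfolding matrix_inv_def by (rule someI_ex)
  then show ?thesis by simp
qed

lemma TiT_entry: "(\<Sum>l\<in>UNIV. Ti $ m $ l * TT $ l $ k) = (if m = k then 1 else 0)"
  using TiT unfolding matrix_matrix_mult_def mat_def by (simp add: vec_eq_iff)

lemma TT_sym: "TT $ k $ l = TT $ l $ k"
proof -
  have "cmod (Cz $ k $ l) = cmod (Cz $ l $ k)"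
    using cc_herm[of "Inr k" "Inr l"] unfolding cc_rr by simp
  then show ?thesis unfolding T_of_def using Cey_sym[of k l] by simp
qed

definition yr :: "'w \<Rightarrow> real^'m" where "yr w = (\<chi> m. yv m w)"

definition Dopt :: "'w \<Rightarrow> complex^'n^'n" where
  "Dopt w = E0 + (\<Sum>m\<in>UNIV. (Ti *v (yr w - ybar)) $ m *\<^sub>R V m)"

definition g :: "'n \<Rightarrow> 'n \<Rightarrow> 'm \<Rightarrow> complex" where
  "g i j l = (\<Sum>m\<in>UNIV. of_real (Ti $ m $ l) * V m $ i $ j)"

lemma D_entry: "Dopt w $ i $ j = E0 $ i $ j + (\<Sum>l\<in>UNIV. g i j l * yt l w)"
proof -
  have "Dopt w $ i $ j = E0 $ i $ j + (\<Sum>m\<in>UNIV. of_real ((Ti *v (yr w - ybar)) $ m) * V m $ i $ j)"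
  proof -
    have "Dopt w $ i $ j = E0 $ i $ j + (\<Sum>m\<in>UNIV. (Ti *v (yr w - ybar)) $ m *\<^sub>R (V m $ i $ j))"
      unfolding Dopt_def by (simp add: sum_component)
    then show ?thesis by (simp add: scaleR_conv_of_real)
  qed
  also have "(\<Sum>m\<in>UNIV. of_real ((Ti *v (yr w - ybar)) $ m) * V m $ i $ j)
      = (\<Sum>m\<in>UNIV. \<Sum>l\<in>UNIV. of_real (Ti $ m $ l) * V m $ i $ j * yt l w)"
    unfolding matrix_vector_mult_def yt_def yr_def
    by (simp add: sum_distrib_right sum_distrib_left mult.commute mult.left_commute)
  also have "\<dots> = (\<Sum>l\<in>UNIV. g i j l * yt l w)"
    unfolding g_def by (subst sum.swap) (simp add: sum_distrib_right)
  finally show ?thesis .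
qed

lemma yt_real: "cnj (yt l w) = yt l w"
  unfolding yt_def by simp

definition Aff :: "('w \<Rightarrow> complex) \<Rightarrow> bool" where
  "Aff h \<longleftrightarrow> (\<exists>c0 c. h = (\<lambda>w. c0 + (\<Sum>l\<in>UNIV. c l * yt l w)))"

lemma Aff_D: "Aff (\<lambda>w. Dopt w $ i $ j)"
  unfolding Aff_def D_entry by blast

lemma Aff_diff: "Aff h1 \<Longrightarrow> Aff h2 \<Longrightarrow> Aff (\<lambda>w. h1 w - h2 w)"
proof -
  assume "Aff h1" "Aff h2"
  then obtain c0 c d0 d where "h1 = (\<lambda>w. c0 + (\<Sum>l\<in>UNIV. c l * yt l w))" "h2 = (\<lambda>w. d0 + (\<Sum>l\<in>UNIV. d l * yt l w))"
    unfolding Aff_def by blast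
  then show ?thesis unfolding Aff_def
    by (intro exI[of _ "c0 - d0"] exI[of _ "\<lambda>l. c l - d l"])
       (simp add: fun_eq_iff sum_subtractf left_diff_distrib)
qed

lemma Aff_cnj: "Aff h \<Longrightarrow> Aff (\<lambda>w. cnj (h w))"
  unfolding Aff_def
  apply (elim exE)
  subgoal for c0 c
    by (rule exI[of _ "cnj c0"], rule exI[of _ "\<lambda>l. cnj (c l)"]) (simp add: fun_eq_iff yt_real)
  done

lemma L2_integrable: "L2 M f \<Longrightarrow> integrable M f"
  using L2_mult_integrable[of f "\<lambda>_. 1"] by simp

lemma Aff_L2: "Aff h \<Longrightarrow> L2 M h"
  unfolding Aff_def using L2_yt by (auto intro!: L2_add L2_sum L2_cmult L2_const)

definition err :: "'n \<Rightarrow> 'n \<Rightarrow> 'w \<Rightarrow> complex" where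
  "err i j w = Dopt w $ i $ j - Xij i j w"

lemma L2_err: "L2 M (err i j)"
  unfolding err_def[abs_def] using Aff_L2[OF Aff_D] L2_Xij by (intro L2_diff)

lemma int_yt: "integrable M (yt l)"
  using L2_mult_integrable[OF L2_yt L2_const[of 1]] by simp

lemma E_err: "integral\<^sup>L M (err i j) = 0"
proof -
  have i1: "integrable M (\<lambda>w. Dopt w $ i $ j)" using L2_integrable[OF Aff_L2[OF Aff_D]] .
  have i2: "integrable M (Xij i j)" using L2_integrable[OF L2_Xij] .
  have "integral\<^sup>L M (err i j) = integral\<^sup>L M (\<lambda>w. Dopt w $ i $ j) - integral\<^sup>L M (Xij i j)"
    unfolding err_def[abs_def] using i1 i2 by (rule Bochner_Integration.integral_diff)
  also have "integral\<^sup>L M (\<lambda>w. Dopt w $ i $ j) = integral\<^sup>L M (\<lambda>w. E0 $ i $ j + (\<Sum>l\<in>UNIV. g i j l * yt l w))"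
    unfolding D_entry ..
  also have "integral\<^sup>L M (\<lambda>w. E0 $ i $ j + (\<Sum>l\<in>UNIV. g i j l * yt l w)) = E0 $ i $ j"
  proof -
    have "integral\<^sup>L M (\<lambda>w. (\<Sum>l\<in>UNIV. g i j l * yt l w)) = (\<Sum>l\<in>UNIV. g i j l * integral\<^sup>L M (yt l))"
      using int_yt by (subst Bochner_Integration.integral_sum) auto
    then have "integral\<^sup>L M (\<lambda>w. (\<Sum>l\<in>UNIV. g i j l * yt l w)) = 0" using E_yt by simp
    moreover have "integrable M (\<lambda>w. (\<Sum>l\<in>UNIV. g i j l * yt l w))" using int_yt by auto
    ultimately show ?thesis by (simp add: prob_space)
  qed
  also have "E0 $ i $ j - integral\<^sup>L M (Xij i j) = 0" using E_X by simp
  finally show ?thesis .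
qed

lemma E_yt_err: "integral\<^sup>L M (\<lambda>w. yt k w * err i j w) = 0"
proof -
  have eq: "(\<lambda>w. yt k w * err i j w) = (\<lambda>w. E0 $ i $ j * yt k w + (\<Sum>l\<in>UNIV. g i j l * (yt l w * yt k w)) - yt k w * Xij i j w)"
    unfolding err_def D_entry by (simp add: fun_eq_iff algebra_simps sum_distrib_left)
  have yy: "\<And>l. integral\<^sup>L M (\<lambda>w. yt l w * yt k w) = of_real (TT $ l $ k)" by (rule E_yy)
  have "integral\<^sup>L M (\<lambda>w. yt k w * err i j w) = (\<Sum>l\<in>UNIV. g i j l * of_real (TT $ l $ k)) - V k $ i $ j"
    unfolding eq using int_yt E_yt int_yy yy E_yX L2_mult_integrable[OF L2_yt L2_Xij]
    by (simp add: Bochner_Integration.integral_add Bochner_Integration.integral_diff Bochner_Integration.integral_sum)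
  also have "(\<Sum>l\<in>UNIV. g i j l * of_real (TT $ l $ k)) = V k $ i $ j"
  proof -
    have "(\<Sum>l\<in>UNIV. g i j l * of_real (TT $ l $ k)) = (\<Sum>l\<in>UNIV. \<Sum>m\<in>UNIV. of_real (Ti $ m $ l) * V m $ i $ j * of_real (TT $ l $ k))"
      unfolding g_def by (simp add: sum_distrib_right)
    also have "\<dots> = (\<Sum>m\<in>UNIV. \<Sum>l\<in>UNIV. of_real (Ti $ m $ l) * V m $ i $ j * of_real (TT $ l $ k))"
      by (rule sum.swap)
    also have "\<dots> = (\<Sum>m\<in>UNIV. V m $ i $ j * of_real (\<Sum>l\<in>UNIV. Ti $ m $ l * TT $ l $ k))"
      by (simp add: sum_distrib_left mult.commute mult.left_commute)
    also have "\<dots> = V k $ i $ j" unfolding TiT_entry by (simp add: if_distrib cong: if_cong)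
    finally show ?thesis .
  qed
  finally show ?thesis by simp
qed

lemma Aff_orth: "Aff h \<Longrightarrow> integral\<^sup>L M (\<lambda>w. h w * err i j w) = 0"
  unfolding Aff_def
proof (elim exE)
  fix c0 c assume h: "h = (\<lambda>w. c0 + (\<Sum>l\<in>UNIV. c l * yt l w))"
  have "(\<lambda>w. h w * err i j w) = (\<lambda>w. c0 * err i j w + (\<Sum>l\<in>UNIV. c l * (yt l w * err i j w)))"
    unfolding h by (simp add: fun_eq_iff distrib_right sum_distrib_right mult.assoc)
  moreover have "integrable M (err i j)" using L2_mult_integrable[OF L2_err L2_const[of 1]] by simp
  moreover have "\<And>l. integrable M (\<lambda>w. yt l w * err i j w)" using L2_mult_integrable[OF L2_yt L2_err] .
  ultimately show "integral\<^sup>L M (\<lambda>w. h w * err i j w) = 0"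
    using E_err E_yt_err by (simp add: Bochner_Integration.integral_add Bochner_Integration.integral_sum)
qed

end

lemma cmod_sq_add: "(cmod (a + b))^2 = (cmod a)^2 + (cmod b)^2 + 2 * Re (cnj a * b)"
  by (simp only: cmod_power2) (simp add: power2_eq_square algebra_simps)

lemma frob_sq: "(frob_norm B)^2 = (\<Sum>i\<in>UNIV. \<Sum>j\<in>UNIV. (cmod (B $ i $ j))^2)"
  unfolding frob_norm_def by (rule real_sqrt_pow2) (intro sum_nonneg, simp)

context TS2
begin

lemma Aff_const: "Aff (\<lambda>w. c)"
  unfolding Aff_def by (intro exI[of _ c] exI[of _ "\<lambda>_. 0"]) simp

lemma couter_X: "couter (x w) (x w) $ i $ j = Xij i j w"
  by (simp add: couter_def Xij_def ux_def)

lemma pyth: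
  assumes h: "Aff h"
  shows "integral\<^sup>L M (\<lambda>w. (cmod (h w - Xij i j w))^2)
       = integral\<^sup>L M (\<lambda>w. (cmod (h w - Dopt w $ i $ j))^2) + integral\<^sup>L M (\<lambda>w. (cmod (err i j w))^2)"
    and "integrable M (\<lambda>w. (cmod (h w - Xij i j w))^2)"
proof -
  have a: "Aff (\<lambda>w. h w - Dopt w $ i $ j)" by (rule Aff_diff[OF h Aff_D])
  have e: "\<And>w. h w - Xij i j w = (h w - Dopt w $ i $ j) + err i j w" by (simp add: err_def)
  have i1: "integrable M (\<lambda>w. (cmod (h w - Dopt w $ i $ j))^2)" using L2_sq_integrable[OF Aff_L2[OF a]] .
  have i2: "integrable M (\<lambda>w. (cmod (err i j w))^2)" using L2_sq_integrable[OF L2_err] .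
  have i3: "integrable M (\<lambda>w. cnj (h w - Dopt w $ i $ j) * err i j w)"
    using L2_mult_integrable[OF L2_cnj[OF Aff_L2[OF a]] L2_err] .
  have o: "integral\<^sup>L M (\<lambda>w. cnj (h w - Dopt w $ i $ j) * err i j w) = 0"
    using Aff_orth[OF Aff_cnj[OF a]] .
  have i4: "integrable M (\<lambda>w. 2 * Re (cnj (h w - Dopt w $ i $ j) * err i j w))"
    by (intro integrable_mult_right integrable_Re[OF i3])
  have o2: "integral\<^sup>L M (\<lambda>w. 2 * Re (cnj (h w - Dopt w $ i $ j) * err i j w)) = 0"
  proof -
    have "integral\<^sup>L M (\<lambda>w. 2 * Re (cnj (h w - Dopt w $ i $ j) * err i j w)) = 2 * integral\<^sup>L M (\<lambda>w. Re (cnj (h w - Dopt w $ i $ j) * err i j w))"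
      by (rule integral_mult_right_zero)
    also have "integral\<^sup>L M (\<lambda>w. Re (cnj (h w - Dopt w $ i $ j) * err i j w)) = Re (integral\<^sup>L M (\<lambda>w. cnj (h w - Dopt w $ i $ j) * err i j w))"
      by (rule integral_bounded_linear[OF bounded_linear_Re]) (rule i3)
    finally show ?thesis by (simp only: o) simp
  qed
  have eq: "(\<lambda>w. (cmod (h w - Xij i j w))^2) = (\<lambda>w. (cmod (h w - Dopt w $ i $ j))^2 + (cmod (err i j w))^2 + 2 * Re (cnj (h w - Dopt w $ i $ j) * err i j w))"
    unfolding e cmod_sq_add ..
  show "integral\<^sup>L M (\<lambda>w. (cmod (h w - Xij i j w))^2)
       = integral\<^sup>L M (\<lambda>w. (cmod (h w - Dopt w $ i $ j))^2) + integral\<^sup>L M (\<lambda>w. (cmod (err i j w))^2)"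
    unfolding eq
    by (simp only: Bochner_Integration.integral_add[OF Bochner_Integration.integrable_add[OF i1 i2] i4] Bochner_Integration.integral_add[OF i1 i2] o2)
  show "integrable M (\<lambda>w. (cmod (h w - Xij i j w))^2)"
    unfolding eq by (intro Bochner_Integration.integrable_add i1 i2 i4)
qed

lemma main_decomp:
  assumes F: "\<And>i j. Aff (\<lambda>w. F w $ i $ j)"
  shows "integral\<^sup>L M (\<lambda>w. (frob_norm (F w - couter (x w) (x w)))^2)
     = (\<Sum>i\<in>UNIV. \<Sum>j\<in>UNIV. integral\<^sup>L M (\<lambda>w. (cmod (F w $ i $ j - Dopt w $ i $ j))^2))
       + integral\<^sup>L M (\<lambda>w. (frob_norm (Dopt w - couter (x w) (x w)))^2)"
proof -
  have fF: "\<And>w. (frob_norm (F w - couter (x w) (x w)))^2 = (\<Sum>i\<in>UNIV. \<Sum>j\<in>UNIV. (cmod (F w $ i $ j - Xij i j w))^2)"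
    unfolding frob_sq by (simp add: couter_X)
  have fD: "\<And>w. (frob_norm (Dopt w - couter (x w) (x w)))^2 = (\<Sum>i\<in>UNIV. \<Sum>j\<in>UNIV. (cmod (err i j w))^2)"
    unfolding frob_sq by (simp add: couter_X err_def)
  have iD: "\<And>i j. integrable M (\<lambda>w. (cmod (err i j w))^2)" using L2_sq_integrable[OF L2_err] .
  have "integral\<^sup>L M (\<lambda>w. (frob_norm (F w - couter (x w) (x w)))^2)
     = (\<Sum>i\<in>UNIV. \<Sum>j\<in>UNIV. integral\<^sup>L M (\<lambda>w. (cmod (F w $ i $ j - Xij i j w))^2))"
    unfolding fF using pyth(2)[OF F]
    by (subst Bochner_Integration.integral_sum, fastforce, subst Bochner_Integration.integral_sum, auto)
  also have "\<dots> = (\<Sum>i\<in>UNIV. \<Sum>j\<in>UNIV. integral\<^sup>L M (\<lambda>w. (cmod (F w $ i $ j - Dopt w $ i $ j))^2) + integral\<^sup>L M (\<lambda>w. (cmod (err i j w))^2))"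
    using pyth(1)[OF F] by simp
  also have "\<dots> = (\<Sum>i\<in>UNIV. \<Sum>j\<in>UNIV. integral\<^sup>L M (\<lambda>w. (cmod (F w $ i $ j - Dopt w $ i $ j))^2))
       + (\<Sum>i\<in>UNIV. \<Sum>j\<in>UNIV. integral\<^sup>L M (\<lambda>w. (cmod (err i j w))^2))"
    by (simp add: sum.distrib)
  also have "(\<Sum>i\<in>UNIV. \<Sum>j\<in>UNIV. integral\<^sup>L M (\<lambda>w. (cmod (err i j w))^2))
      = integral\<^sup>L M (\<lambda>w. (frob_norm (Dopt w - couter (x w) (x w)))^2)"
    unfolding fD using iD
    by (subst Bochner_Integration.integral_sum, fastforce, subst Bochner_Integration.integral_sum, auto)
  finally show ?thesis .
qed

lemma Aff_lin:
  "Aff (\<lambda>w. (W0 + (\<Sum>m\<in>UNIV. yr w $ m *\<^sub>R W m)) $ i $ j)"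
proof -
  have "\<And>w. (W0 + (\<Sum>m\<in>UNIV. yr w $ m *\<^sub>R W m)) $ i $ j
      = (W0 $ i $ j + (\<Sum>m\<in>UNIV. of_real (ybar $ m) * W m $ i $ j)) + (\<Sum>m\<in>UNIV. W m $ i $ j * yt m w)"
  proof -
    fix w
    have c1: "(W0 + (\<Sum>m\<in>UNIV. yr w $ m *\<^sub>R W m)) $ i $ j = W0 $ i $ j + (\<Sum>m\<in>UNIV. (yt m w + of_real (ybar $ m)) * W m $ i $ j)"
    proof -
      have "(W0 + (\<Sum>m\<in>UNIV. yr w $ m *\<^sub>R W m)) $ i $ j = W0 $ i $ j + (\<Sum>m\<in>UNIV. yr w $ m *\<^sub>R (W m $ i $ j))"
        by (simp add: sum_component)
      then show ?thesis by (simp add: yt_def yr_def scaleR_conv_of_real)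
    qed
    have c2: "(\<Sum>m\<in>UNIV. (yt m w + of_real (ybar $ m)) * W m $ i $ j) = (\<Sum>m\<in>UNIV. of_real (ybar $ m) * W m $ i $ j) + (\<Sum>m\<in>UNIV. W m $ i $ j * yt m w)"
      by (simp add: distrib_right distrib_left sum.distrib mult.commute add.commute)
    show "(W0 + (\<Sum>m\<in>UNIV. yr w $ m *\<^sub>R W m)) $ i $ j
      = (W0 $ i $ j + (\<Sum>m\<in>UNIV. of_real (ybar $ m) * W m $ i $ j)) + (\<Sum>m\<in>UNIV. W m $ i $ j * yt m w)"
      unfolding c1 c2 by (simp add: add.assoc)
  qed
  then show ?thesis unfolding Aff_def
    by (intro exI[of _ "W0 $ i $ j + (\<Sum>m\<in>UNIV. of_real (ybar $ m) * W m $ i $ j)"] exI[of _ "\<lambda>m. W m $ i $ j"]) (simp add: fun_eq_iff)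
qed

end

lemma cmod_sq0: "(cmod (a - b))^2 = 0 \<Longrightarrow> a = b"
  by simp

context TS2
begin

lemma conj1: "\<exists>W0 W. \<forall>w. Dopt w = W0 + (\<Sum>m\<in>UNIV. yr w $ m *\<^sub>R W m)"
proof -
  have key: "\<And>v. (\<Sum>m\<in>UNIV. (Ti *v v) $ m *\<^sub>R V m) = (\<Sum>l\<in>UNIV. v $ l *\<^sub>R (\<Sum>m\<in>UNIV. Ti $ m $ l *\<^sub>R V m))"
  proof -
    fix v :: "real^'m"
    have "(\<Sum>m\<in>UNIV. (Ti *v v) $ m *\<^sub>R V m) = (\<Sum>m\<in>UNIV. \<Sum>l\<in>UNIV. (Ti $ m $ l * v $ l) *\<^sub>R V m)"
      unfolding matrix_vector_mult_def by (simp add: scaleR_sum_left)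
    also have "\<dots> = (\<Sum>l\<in>UNIV. \<Sum>m\<in>UNIV. (Ti $ m $ l * v $ l) *\<^sub>R V m)" by (rule sum.swap)
    also have "\<dots> = (\<Sum>l\<in>UNIV. v $ l *\<^sub>R (\<Sum>m\<in>UNIV. Ti $ m $ l *\<^sub>R V m))"
      by (simp add: scaleR_sum_right mult.commute)
    finally show "(\<Sum>m\<in>UNIV. (Ti *v v) $ m *\<^sub>R V m) = (\<Sum>l\<in>UNIV. v $ l *\<^sub>R (\<Sum>m\<in>UNIV. Ti $ m $ l *\<^sub>R V m))" .
  qed
  have "\<And>w. Dopt w = (E0 - (\<Sum>m\<in>UNIV. (Ti *v ybar) $ m *\<^sub>R V m)) + (\<Sum>l\<in>UNIV. yr w $ l *\<^sub>R (\<Sum>m\<in>UNIV. Ti $ m $ l *\<^sub>R V m))"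
  proof -
    fix w
    have "(\<Sum>m\<in>UNIV. (Ti *v (yr w - ybar)) $ m *\<^sub>R V m)
        = (\<Sum>m\<in>UNIV. (Ti *v yr w) $ m *\<^sub>R V m) - (\<Sum>m\<in>UNIV. (Ti *v ybar) $ m *\<^sub>R V m)"
      by (simp add: matrix_vector_mult_diff_distrib scaleR_diff_left sum_subtractf)
    then show "Dopt w = (E0 - (\<Sum>m\<in>UNIV. (Ti *v ybar) $ m *\<^sub>R V m)) + (\<Sum>l\<in>UNIV. yr w $ l *\<^sub>R (\<Sum>m\<in>UNIV. Ti $ m $ l *\<^sub>R V m))"
      unfolding Dopt_def key by simp
  qed
  then show ?thesis
    by (intro exI[of _ "E0 - (\<Sum>m\<in>UNIV. (Ti *v ybar) $ m *\<^sub>R V m)"] exI[of _ "\<lambda>l. \<Sum>m\<in>UNIV. Ti $ m $ l *\<^sub>R V m"]) simp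
qed

lemma decomp_lin:
  "integral\<^sup>L M (\<lambda>w. (frob_norm (W0 + (\<Sum>m\<in>UNIV. yr w $ m *\<^sub>R W m) - couter (x w) (x w)))^2)
     = (\<Sum>i\<in>UNIV. \<Sum>j\<in>UNIV. integral\<^sup>L M (\<lambda>w. (cmod ((W0 + (\<Sum>m\<in>UNIV. yr w $ m *\<^sub>R W m)) $ i $ j - Dopt w $ i $ j))^2))
       + integral\<^sup>L M (\<lambda>w. (frob_norm (Dopt w - couter (x w) (x w)))^2)"
  by (rule main_decomp[OF Aff_lin])

lemma sq_int: "integrable M (\<lambda>w. (cmod ((W0 + (\<Sum>m\<in>UNIV. yr w $ m *\<^sub>R W m)) $ i $ j - Dopt w $ i $ j))^2)"
  using L2_sq_integrable[OF Aff_L2[OF Aff_diff[OF Aff_lin Aff_D]]] .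

lemma conj2: "integral\<^sup>L M (\<lambda>w. (frob_norm (Dopt w - couter (x w) (x w)))^2)
   \<le> integral\<^sup>L M (\<lambda>w. (frob_norm (W0 + (\<Sum>m\<in>UNIV. yr w $ m *\<^sub>R W m) - couter (x w) (x w)))^2)"
proof -
  have "0 \<le> (\<Sum>i\<in>UNIV. \<Sum>j\<in>UNIV. integral\<^sup>L M (\<lambda>w. (cmod ((W0 + (\<Sum>m\<in>UNIV. yr w $ m *\<^sub>R W m)) $ i $ j - Dopt w $ i $ j))^2))"
    by (intro sum_nonneg Bochner_Integration.integral_nonneg) simp
  then show ?thesis unfolding decomp_lin by simp
qed

lemma conj3:
  assumes "integral\<^sup>L M (\<lambda>w. (frob_norm (W0 + (\<Sum>m\<in>UNIV. yr w $ m *\<^sub>R W m) - couter (x w) (x w)))^2)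
     = integral\<^sup>L M (\<lambda>w. (frob_norm (Dopt w - couter (x w) (x w)))^2)"
  shows "AE w in M. W0 + (\<Sum>m\<in>UNIV. yr w $ m *\<^sub>R W m) = Dopt w"
proof -
  let ?f = "\<lambda>i j w. (cmod ((W0 + (\<Sum>m\<in>UNIV. yr w $ m *\<^sub>R W m)) $ i $ j - Dopt w $ i $ j))^2"
  have s0: "(\<Sum>i\<in>UNIV. \<Sum>j\<in>UNIV. integral\<^sup>L M (?f i j)) = 0"
    using assms unfolding decomp_lin by simp
  have nn: "\<And>i j. 0 \<le> integral\<^sup>L M (?f i j)" by (intro Bochner_Integration.integral_nonneg) simp
  have z: "\<And>i j. integral\<^sup>L M (?f i j) = 0"
  proof -
    fix i j
    have "\<forall>i\<in>UNIV. (\<Sum>j\<in>UNIV. integral\<^sup>L M (?f i j)) = 0"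
      using s0 by (subst (asm) sum_nonneg_eq_0_iff) (auto intro!: sum_nonneg nn)
    then have "(\<Sum>j\<in>UNIV. integral\<^sup>L M (?f i j)) = 0" by simp
    then show "integral\<^sup>L M (?f i j) = 0"
      by (subst (asm) sum_nonneg_eq_0_iff) (auto intro!: nn)
  qed
  have ae: "\<And>i j. AE w in M. ?f i j w = 0"
    using z by (subst (asm) integral_nonneg_eq_0_iff_AE) (auto simp del: vector_add_component simp add: sq_int)
  have ae2: "\<And>i j. AE w in M. (W0 + (\<Sum>m\<in>UNIV. yr w $ m *\<^sub>R W m)) $ i $ j = Dopt w $ i $ j"
  proof -
    fix i j
    show "AE w in M. (W0 + (\<Sum>m\<in>UNIV. yr w $ m *\<^sub>R W m)) $ i $ j = Dopt w $ i $ j"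
      using ae[of i j] by eventually_elim (rule cmod_sq0)
  qed
  have "AE w in M. \<forall>i\<in>UNIV. \<forall>j\<in>UNIV. (W0 + (\<Sum>m\<in>UNIV. yr w $ m *\<^sub>R W m)) $ i $ j = Dopt w $ i $ j"
    by (intro AE_finite_allI ae2) simp_all
  then show ?thesis
    by eventually_elim (simp only: vec_eq_iff, blast)
qed

end

lemma cadj_nth_gen: "cadj P $ i $ j = cnj (P $ j $ i)" by (simp add: cadj_def)

lemma frob_norm_minus: "frob_norm (A - B) = frob_norm (B - A)"
  unfolding frob_norm_def by (simp add: norm_minus_commute)

context TS2
begin

lemma quad:
  fixes v :: "'m \<Rightarrow> complex"
  defines "G \<equiv> (\<lambda>l. \<Sum>m\<in>UNIV. of_real (Ti $ m $ l) * v m)"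
  shows "(\<Sum>l\<in>UNIV. \<Sum>l'\<in>UNIV. cnj (G l) * G l' * of_real (TT $ l $ l'))
       = (\<Sum>m\<in>UNIV. \<Sum>m'\<in>UNIV. of_real (Ti $ m $ m') * (cnj (v m) * v m'))"
proof -
  have inner: "\<And>l. (\<Sum>l'\<in>UNIV. G l' * of_real (TT $ l $ l')) = v l"
  proof -
    fix l
    have "(\<Sum>l'\<in>UNIV. G l' * of_real (TT $ l $ l')) = (\<Sum>l'\<in>UNIV. \<Sum>m\<in>UNIV. v m * of_real (Ti $ m $ l' * TT $ l' $ l))"
      unfolding G_def by (simp add: sum_distrib_right sum_distrib_left TT_sym[of l] mult.commute mult.left_commute)
    also have "\<dots> = (\<Sum>m\<in>UNIV. \<Sum>l'\<in>UNIV. v m * of_real (Ti $ m $ l' * TT $ l' $ l))" by (rule sum.swap)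
    also have "\<dots> = (\<Sum>m\<in>UNIV. v m * of_real (\<Sum>l'\<in>UNIV. Ti $ m $ l' * TT $ l' $ l))"
      by (simp add: sum_distrib_left)
    also have "\<dots> = v l" unfolding TiT_entry by (simp add: if_distrib cong: if_cong)
    finally show "(\<Sum>l'\<in>UNIV. G l' * of_real (TT $ l $ l')) = v l" .
  qed
  have "(\<Sum>l\<in>UNIV. \<Sum>l'\<in>UNIV. cnj (G l) * G l' * of_real (TT $ l $ l')) = (\<Sum>l\<in>UNIV. cnj (G l) * v l)"
  proof (rule sum.cong[OF refl])
    fix l
    have "(\<Sum>l'\<in>UNIV. cnj (G l) * G l' * of_real (TT $ l $ l')) = cnj (G l) * (\<Sum>l'\<in>UNIV. G l' * of_real (TT $ l $ l'))"
      by (simp add: sum_distrib_left mult.assoc)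
    then show "(\<Sum>l'\<in>UNIV. cnj (G l) * G l' * of_real (TT $ l $ l')) = cnj (G l) * v l" unfolding inner .
  qed
  also have "\<dots> = (\<Sum>l\<in>UNIV. \<Sum>m\<in>UNIV. of_real (Ti $ m $ l) * (cnj (v m) * v l))"
    unfolding G_def by (simp add: sum_distrib_right mult.assoc)
  also have "\<dots> = (\<Sum>m\<in>UNIV. \<Sum>l\<in>UNIV. of_real (Ti $ m $ l) * (cnj (v m) * v l))" by (rule sum.swap)
  finally show ?thesis .
qed

lemma E_hh: "complex_of_real (integral\<^sup>L M (\<lambda>w. (cmod (E0 $ i $ j - Dopt w $ i $ j))^2))
   = (\<Sum>m\<in>UNIV. \<Sum>m'\<in>UNIV. of_real (Ti $ m $ m') * (cnj (V m $ i $ j) * V m' $ i $ j))"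
proof -
  let ?h = "\<lambda>w. \<Sum>l\<in>UNIV. g i j l * yt l w"
  have e1: "\<And>w. complex_of_real ((cmod (E0 $ i $ j - Dopt w $ i $ j))^2) = cnj (?h w) * ?h w"
  proof -
    fix w
    have "E0 $ i $ j - Dopt w $ i $ j = - ?h w" by (simp add: D_entry)
    then have "cmod (E0 $ i $ j - Dopt w $ i $ j) = cmod (?h w)" by simp
    then have "complex_of_real ((cmod (E0 $ i $ j - Dopt w $ i $ j))^2) = complex_of_real ((cmod (?h w))^2)" by simp
    also have "\<dots> = ?h w * cnj (?h w)" by (rule complex_norm_square)
    finally show "complex_of_real ((cmod (E0 $ i $ j - Dopt w $ i $ j))^2) = cnj (?h w) * ?h w" by (simp add: mult.commute)
  qed
  have e2: "\<And>w. cnj (?h w) * ?h w = (\<Sum>l\<in>UNIV. \<Sum>l'\<in>UNIV. cnj (g i j l) * g i j l' * (yt l w * yt l' w))"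
  proof -
    fix w
    have c: "cnj (?h w) = (\<Sum>l\<in>UNIV. cnj (g i j l) * yt l w)" by (simp add: yt_real)
    have "cnj (?h w) * ?h w = (\<Sum>l\<in>UNIV. \<Sum>l'\<in>UNIV. (cnj (g i j l) * yt l w) * (g i j l' * yt l' w))"
      unfolding c by (rule sum_product)
    also have "\<dots> = (\<Sum>l\<in>UNIV. \<Sum>l'\<in>UNIV. cnj (g i j l) * g i j l' * (yt l w * yt l' w))"
      by (intro sum.cong refl) (simp add: mult_ac)
    finally show "cnj (?h w) * ?h w = (\<Sum>l\<in>UNIV. \<Sum>l'\<in>UNIV. cnj (g i j l) * g i j l' * (yt l w * yt l' w))" .
  qed
  have "complex_of_real (integral\<^sup>L M (\<lambda>w. (cmod (E0 $ i $ j - Dopt w $ i $ j))^2))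
      = integral\<^sup>L M (\<lambda>w. complex_of_real ((cmod (E0 $ i $ j - Dopt w $ i $ j))^2))"
    by (rule integral_complex_of_real[symmetric])
  also have "\<dots> = integral\<^sup>L M (\<lambda>w. \<Sum>l\<in>UNIV. \<Sum>l'\<in>UNIV. cnj (g i j l) * g i j l' * (yt l w * yt l' w))"
    unfolding e1 e2 ..
  also have "\<dots> = (\<Sum>l\<in>UNIV. \<Sum>l'\<in>UNIV. cnj (g i j l) * g i j l' * of_real (TT $ l $ l'))"
    using int_yy E_yy
    by (simp add: Bochner_Integration.integral_sum Bochner_Integration.integrable_sum)
  also have "\<dots> = (\<Sum>m\<in>UNIV. \<Sum>m'\<in>UNIV. of_real (Ti $ m $ m') * (cnj (V m $ i $ j) * V m' $ i $ j))"
    unfolding g_def by (rule quad)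
  finally show ?thesis .
qed

lemma trace_eq: "trace (cadj P ** Q) = (\<Sum>i\<in>UNIV. \<Sum>j\<in>UNIV. cnj (P $ i $ j) * Q $ i $ j)"
  unfolding trace_def matrix_matrix_mult_def by (simp add: cadj_nth_gen) (rule sum.swap)

lemma conj4:
  "complex_of_real (integral\<^sup>L M (\<lambda>w. (frob_norm (Dopt w - couter (x w) (x w)))^2))
   = complex_of_real (integral\<^sup>L M (\<lambda>w. (frob_norm (couter (x w) (x w) - E0))^2))
     - (\<Sum>m\<in>UNIV. \<Sum>m'\<in>UNIV. complex_of_real (Ti $ m $ m') * trace (cadj (V m) ** V m'))"
proof -
  have dec: "integral\<^sup>L M (\<lambda>w. (frob_norm (E0 - couter (x w) (x w)))^2)
     = (\<Sum>i\<in>UNIV. \<Sum>j\<in>UNIV. integral\<^sup>L M (\<lambda>w. (cmod (E0 $ i $ j - Dopt w $ i $ j))^2))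
       + integral\<^sup>L M (\<lambda>w. (frob_norm (Dopt w - couter (x w) (x w)))^2)"
    by (rule main_decomp) (rule Aff_const)
  have "complex_of_real (\<Sum>i\<in>UNIV. \<Sum>j\<in>UNIV. integral\<^sup>L M (\<lambda>w. (cmod (E0 $ i $ j - Dopt w $ i $ j))^2))
      = (\<Sum>i\<in>UNIV. \<Sum>j\<in>UNIV. \<Sum>m\<in>UNIV. \<Sum>m'\<in>UNIV. of_real (Ti $ m $ m') * (cnj (V m $ i $ j) * V m' $ i $ j))"
    by (simp only: of_real_sum E_hh)
  also have "\<dots> = (\<Sum>m\<in>UNIV. \<Sum>m'\<in>UNIV. complex_of_real (Ti $ m $ m') * trace (cadj (V m) ** V m'))"
  proof -
    have "(\<Sum>i\<in>UNIV. \<Sum>j\<in>UNIV. \<Sum>m\<in>UNIV. \<Sum>m'\<in>UNIV. of_real (Ti $ m $ m') * (cnj (V m $ i $ j) * V m' $ i $ j))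
        = (\<Sum>i\<in>UNIV. \<Sum>m\<in>UNIV. \<Sum>j\<in>UNIV. \<Sum>m'\<in>UNIV. of_real (Ti $ m $ m') * (cnj (V m $ i $ j) * V m' $ i $ j))"
      by (intro sum.cong refl sum.swap)
    also have "\<dots> = (\<Sum>m\<in>UNIV. \<Sum>i\<in>UNIV. \<Sum>j\<in>UNIV. \<Sum>m'\<in>UNIV. of_real (Ti $ m $ m') * (cnj (V m $ i $ j) * V m' $ i $ j))"
      by (rule sum.swap)
    also have "\<dots> = (\<Sum>m\<in>UNIV. \<Sum>i\<in>UNIV. \<Sum>m'\<in>UNIV. \<Sum>j\<in>UNIV. of_real (Ti $ m $ m') * (cnj (V m $ i $ j) * V m' $ i $ j))"
      by (intro sum.cong refl sum.swap)
    also have "\<dots> = (\<Sum>m\<in>UNIV. \<Sum>m'\<in>UNIV. \<Sum>i\<in>UNIV. \<Sum>j\<in>UNIV. of_real (Ti $ m $ m') * (cnj (V m $ i $ j) * V m' $ i $ j))"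
      by (intro sum.cong refl sum.swap)
    also have "\<dots> = (\<Sum>m\<in>UNIV. \<Sum>m'\<in>UNIV. complex_of_real (Ti $ m $ m') * trace (cadj (V m) ** V m'))"
      unfolding trace_eq by (simp add: sum_distrib_left)
    finally show ?thesis .
  qed
  finally have q: "complex_of_real (\<Sum>i\<in>UNIV. \<Sum>j\<in>UNIV. integral\<^sup>L M (\<lambda>w. (cmod (E0 $ i $ j - Dopt w $ i $ j))^2))
      = (\<Sum>m\<in>UNIV. \<Sum>m'\<in>UNIV. complex_of_real (Ti $ m $ m') * trace (cadj (V m) ** V m'))" .
  have fm: "\<And>w. frob_norm (couter (x w) (x w) - E0) = frob_norm (E0 - couter (x w) (x w))"
    by (rule frob_norm_minus)
  show ?thesis unfolding fm dec q[symmetric] by simp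
qed

end

theorem mainTheorem5:
  fixes M :: "'w measure"
    and A :: "complex^'n^'m"
    and \<sigma>x :: real
    and x :: "'w \<Rightarrow> complex^'n"
    and ez :: "'w \<Rightarrow> complex^'m"
    and ey :: "'w \<Rightarrow> real^'m"
    and Cez :: "complex^'m^'m"
    and eybar :: "real^'m"
    and Cey :: "real^'m^'m"
    and y :: "'w \<Rightarrow> real^'m"
  assumes "prob_space M"
    and "cscg_vec M x (\<sigma>x\<^sup>2 *\<^sub>R mat 1 :: complex^'n^'n)"
    and "cscg_vec M ez Cez"
    and "real_gaussian_vec M ey eybar Cey"
    and "indep3 M x ez ey"
    and y_def: "y = (\<lambda>\<omega>. (\<chi> m. (cmod ((A *v x \<omega>) $ m + ez \<omega> $ m))\<^sup>2 + ey \<omega> $ m))"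
    and "invertible (T_of (Cz_of \<sigma>x A Cez) Cey)"
  defines "D \<equiv> (\<lambda>\<omega>. \<sigma>x\<^sup>2 *\<^sub>R (mat 1 :: complex^'n^'n) + (\<Sum>m\<in>UNIV. (matrix_inv (T_of (Cz_of \<sigma>x A Cez) Cey) *v (y \<omega> - ybar_of (Cz_of \<sigma>x A Cez) eybar)) $ m *\<^sub>R V_of \<sigma>x A m))"
  shows "(\<exists>W0 W. \<forall>\<omega>. D \<omega> = W0 + (\<Sum>m\<in>UNIV. y \<omega> $ m *\<^sub>R W m))
    \<and> (\<forall>(W0::complex^'n^'n) (W::'m \<Rightarrow> complex^'n^'n).
          (\<integral>\<omega>. (frob_norm (D \<omega> - couter (x \<omega>) (x \<omega>)))\<^sup>2 \<partial>M)
          \<le> (\<integral>\<omega>. (frob_norm (W0 + (\<Sum>m\<in>UNIV. y \<omega> $ m *\<^sub>R W m) - couter (x \<omega>) (x \<omega>)))\<^sup>2 \<partial>M))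
    \<and> (\<forall>(W0::complex^'n^'n) (W::'m \<Rightarrow> complex^'n^'n).
          (\<integral>\<omega>. (frob_norm (W0 + (\<Sum>m\<in>UNIV. y \<omega> $ m *\<^sub>R W m) - couter (x \<omega>) (x \<omega>)))\<^sup>2 \<partial>M)
            = (\<integral>\<omega>. (frob_norm (D \<omega> - couter (x \<omega>) (x \<omega>)))\<^sup>2 \<partial>M)
          \<longrightarrow> (AE \<omega> in M. W0 + (\<Sum>m\<in>UNIV. y \<omega> $ m *\<^sub>R W m) = D \<omega>))
    \<and> complex_of_real (\<integral>\<omega>. (frob_norm (D \<omega> - couter (x \<omega>) (x \<omega>)))\<^sup>2 \<partial>M)
        = complex_of_real (\<integral>\<omega>. (frob_norm (couter (x \<omega>) (x \<omega>) - \<sigma>x\<^sup>2 *\<^sub>R mat 1))\<^sup>2 \<partial>M)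
          - (\<Sum>m\<in>UNIV. \<Sum>m'\<in>UNIV. complex_of_real (matrix_inv (T_of (Cz_of \<sigma>x A Cez) Cey) $ m $ m') * trace (cadj (V_of \<sigma>x A m) ** V_of \<sigma>x A m'))"
proof -
  interpret T: TS2 M A \<sigma>x x ez ey Cez eybar Cey
    using assms(1-5,7) by (simp add: TS2_def TS_def TS2_axioms_def)
  have yeq: "y = T.yr"
    unfolding y_def by (simp add: fun_eq_iff T.yr_def T.yv_def)
  have Deq: "D = T.Dopt"
    unfolding D_def by (simp add: fun_eq_iff T.Dopt_def yeq)
  show ?thesis
    unfolding Deq yeq
  proof (intro conjI allI impI)
    show "\<exists>W0 W. \<forall>w. T.Dopt w = W0 + (\<Sum>m\<in>UNIV. T.yr w $ m *\<^sub>R W m)" by (rule T.conj1)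
  next
    fix W0 W
    show "(\<integral>w. (frob_norm (T.Dopt w - couter (x w) (x w)))\<^sup>2 \<partial>M)
          \<le> (\<integral>w. (frob_norm (W0 + (\<Sum>m\<in>UNIV. T.yr w $ m *\<^sub>R W m) - couter (x w) (x w)))\<^sup>2 \<partial>M)"
      by (rule T.conj2)
  next
    fix W0 W
    assume "(\<integral>w. (frob_norm (W0 + (\<Sum>m\<in>UNIV. T.yr w $ m *\<^sub>R W m) - couter (x w) (x w)))\<^sup>2 \<partial>M)
            = (\<integral>w. (frob_norm (T.Dopt w - couter (x w) (x w)))\<^sup>2 \<partial>M)"
    then show "AE w in M. W0 + (\<Sum>m\<in>UNIV. T.yr w $ m *\<^sub>R W m) = T.Dopt w" by (rule T.conj3)
  next
    show "complex_of_real (\<integral>w. (frob_norm (T.Dopt w - couter (x w) (x w)))\<^sup>2 \<partial>M)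
        = complex_of_real (\<integral>w. (frob_norm (couter (x w) (x w) - \<sigma>x\<^sup>2 *\<^sub>R mat 1))\<^sup>2 \<partial>M)
          - (\<Sum>m\<in>UNIV. \<Sum>m'\<in>UNIV. complex_of_real (matrix_inv (T_of (Cz_of \<sigma>x A Cez) Cey) $ m $ m') * trace (cadj (V_of \<sigma>x A m) ** V_of \<sigma>x A m'))"
      by (rule T.conj4)
  qed
qed

end
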